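(* Let $\alpha\in[0,1)$, $c_{\mathrm{TX}}>0$, $\phi>0$, $\theta=\phi/c_{\mathrm{TX}}$, integers $N_S\geq B\geq1$, and let $\lambda_j^*$ ($j\geq 0$), $\bar M_{MP}^{\lambda,p_0}$ and $\bar C_{MP}^{\lambda,p_0}$ be as defined in the context. Let $$\mathcal L=\bigcup_{j\geq 1}\left[\{(\lambda,1):\lambda\in(\lambda_{j-1}^*,\lambda_j^* )\}\cup\{(\lambda_j^*,p_0):p_0\in[0,1]\}\right],$$ ordered by: $(\lambda^{(1)},p_0^{(1)})\succ(\lambda^{(2)},p_0^{(2)})$ iff either $\lambda^{(1)}>\lambda^{(2)}$, or $\lambda^{(1)}=\lambda^{(2)}$ and $p_0^{(1)}<p_0^{(2)}$. Then: (i) the map $(\lambda,p_0)\mapsto(\bar C_{MP}^{\lambda,p_0},\bar M_{MP}^{\lambda,p_0})$ is continuous on $\mathcal L$ (with the order topology of $\succ$), i.e. for each $j\geq1$ it is continuous in $\lambda\in(\lambda_{j-1}^*,\lambda_j^* )$ (with $p_0=1$) and in $p_0\in[0,1]$ (with $\lambda=\lambda_j^*$), its limit as $\lambda\uparrow\lambda_j^*$ equals its value at $(\lambda_j^*,1)$, and its limit as $\lambda\downarrow\lambda_j^*$ equals its value at $(\lambda_j^*,0)$; (ii) for all $(\lambda^{(1)},p_0^{(1)}),(\lambda^{(2)},p_0^{(2)})\in\mathcal L$ with $(\lambda^{(1)},p_0^{(1)})\succ(\lambda^{(2)},p_0^{(2)})$, $$\bar C_{MP}^{\lambda^{(1)},p_0^{(1)}}<\bar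 C_{MP}^{\lambda^{(2)},p_0^{(2)}}\quad\text{and}\quad \bar M_{MP}^{\lambda^{(1)},p_0^{(1)}}>\bar M_{MP}^{\lambda^{(2)},p_0^{(2)}}.$$
   Context: Let $\lambda_{\mathrm{th}}=(1+\sqrt{\theta})^{-2}$, $v_{\mathrm{th}}(\lambda,0)=\sqrt{\lambda\theta}+\frac{\lambda}{2}+\sqrt{\lambda}\sqrt{\sqrt{\lambda\theta}+\frac{\lambda}{4}}$, $\eta_j(\lambda)=1-\alpha^{j}(1-\sqrt{\lambda\theta})-v_{\mathrm{th}}(\lambda,0)$ for $j\geq 0$, and $\lambda_j^*$ the unique solution in $[0,\lambda_{\mathrm{th}}]$ of $\eta_j(\lambda)=0$. For $\lambda\in(0,\lambda_{\mathrm{th}})$, $p_0\in[0,1]$, consider the process $V_0=1$ and for $k\geq0$: if $V_k>v_{\mathrm{th}}(\lambda,0)$ set $t_k=1$, $S_{M,k}=\frac{1}{\sqrt{\lambda\theta}}-\frac{1}{V_k}$; if $V_k<v_{\mathrm{th}}(\lambda,0)$ set $t_k=S_{M,k}=0$; if $V_k=v_{\mathrm{th}}(\lambda,0)$ set $t_k=1$, $S_{M,k}=\frac{1}{\sqrt{\lambda\theta}}-\frac{1}{V_k}$ with probability $p_0$ (independently over time) and $t_k=S_{M,k}=0$ otherwise; then $\hat V_k=\frac{V_k}{1+V_kt_kS_{M,k}}$, $V_{k+1}=1-\alpha(1-\hat V_k)$. Define $\bar M_{MP}^{\lambda,p_0}=\lim_{T\to\infty}\mathbb E[\frac{1}{T+1}\sum_{k=0}^T\hat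 V_k]$ (average MSE) and $\bar C_{MP}^{\lambda,p_0}=\lim_{T\to\infty}\mathbb E[\frac{1}{T+1}\sum_{k=0}^T\frac{1}{N_S}t_k(c_{\mathrm{TX}}+\phi S_{M,k})]$ (average per-sensor sensing-transmission cost). This is the myopic policy of a coordinated sensing scheme with infinite ambient SNR, tracking $X_{k+1}=\sqrt\alpha X_k+Z_k$ with unit stationary variance. *)

theory Defs
  imports "HOL-Probability.Probability"
begin

text \<open>Threshold quantities; theta = phi / c_TX is passed as the parameter th.\<close>

definition lam_th :: "real \<Rightarrow> real" where
  "lam_th th = 1 / (1 + sqrt th)^2"

definition v_th :: "real \<Rightarrow> real \<Rightarrow> real" where
  "v_th th lam = sqrt (lam * th) + lam / 2 + sqrt lam * sqrt (sqrt (lam * th) + lam / 4)"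

definition eta :: "real \<Rightarrow> real \<Rightarrow> nat \<Rightarrow> real \<Rightarrow> real" where
  "eta \<alpha> th j lam = 1 - \<alpha> ^ j * (1 - sqrt (lam * th)) - v_th th lam"

definition lam_star :: "real \<Rightarrow> real \<Rightarrow> nat \<Rightarrow> real" where
  "lam_star \<alpha> th j = (THE lam. lam \<in> {0..lam_th th} \<and> eta \<alpha> th j lam = 0)"

definition tx_decision :: "real \<Rightarrow> real \<Rightarrow> real \<Rightarrow> real \<Rightarrow> bool pmf" where
  "tx_decision th lam p0 v =
     (if v > v_th th lam then return_pmf True
      else if v < v_th th lam then return_pmf False
      else bernoulli_pmf p0)"

definition t_ind :: "bool \<Rightarrow> real" where
  "t_ind t = (if t then 1 else 0)"

definition S_M :: "real \<Rightarrow> real \<Rightarrow> real \<Rightarrow> bool \<Rightarrow> real" where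
  "S_M th lam v t = (if t then 1 / sqrt (lam * th) - 1 / v else 0)"

definition V_hat :: "real \<Rightarrow> real \<Rightarrow> real \<Rightarrow> bool \<Rightarrow> real" where
  "V_hat th lam v t = v / (1 + v * t_ind t * S_M th lam v t)"

text \<open>Distribution of the trajectory prefix [(V_0,t_0),...,(V_T,t_T)].\<close>

primrec mp_traj :: "real \<Rightarrow> real \<Rightarrow> real \<Rightarrow> real \<Rightarrow> nat \<Rightarrow> (real \<times> bool) list pmf" where
  "mp_traj \<alpha> th lam p0 0 = map_pmf (\<lambda>b. [(1, b)]) (tx_decision th lam p0 1)"
| "mp_traj \<alpha> th lam p0 (Suc n) =
     bind_pmf (mp_traj \<alpha> th lam p0 n)
       (\<lambda>xs. let v' = 1 - \<alpha> * (1 - V_hat th lam (fst (last xs)) (snd (last xs)))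
             in map_pmf (\<lambda>b. xs @ [(v', b)]) (tx_decision th lam p0 v'))"

definition M_MP :: "real \<Rightarrow> real \<Rightarrow> real \<Rightarrow> real \<Rightarrow> real \<Rightarrow> real" where
  "M_MP \<alpha> cTX \<phi> lam p0 =
     lim (\<lambda>T. measure_pmf.expectation (mp_traj \<alpha> (\<phi> / cTX) lam p0 T)
        (\<lambda>xs. (\<Sum>x\<leftarrow>xs. V_hat (\<phi> / cTX) lam (fst x) (snd x)) / real (T + 1)))"

definition C_MP :: "real \<Rightarrow> real \<Rightarrow> real \<Rightarrow> nat \<Rightarrow> real \<Rightarrow> real \<Rightarrow> real" where
  "C_MP \<alpha> cTX \<phi> NS lam p0 =
     lim (\<lambda>T. measure_pmf.expectation (mp_traj \<alpha> (\<phi> / cTX) lam p0 T)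
        (\<lambda>xs. (\<Sum>x\<leftarrow>xs. (1 / real NS) * t_ind (snd x)
                 * (cTX + \<phi> * S_M (\<phi> / cTX) lam (fst x) (snd x))) / real (T + 1)))"

definition L_set :: "real \<Rightarrow> real \<Rightarrow> (real \<times> real) set" where
  "L_set \<alpha> th = (\<Union>j\<in>{1..}.
      {(lam, 1) | lam. lam \<in> {lam_star \<alpha> th (j - 1) <..< lam_star \<alpha> th j}}
    \<union> {(lam_star \<alpha> th j, p0) | p0. p0 \<in> {0..1}})"

definition mp_succ :: "real \<times> real \<Rightarrow> real \<times> real \<Rightarrow> bool" where
  "mp_succ x y = (fst x > fst y \<or> (fst x = fst y \<and> snd x < snd y))"

end

theory Submission
  imports Defs
begin


definition nxt :: "real \<Rightarrow> real \<Rightarrow> real \<Rightarrow> real \<Rightarrow> bool \<Rightarrow> real" where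
  "nxt \<alpha> th lam v b = 1 - \<alpha> * (1 - V_hat th lam v b)"

lemma fin_traj: "finite (set_pmf (mp_traj \<alpha> th lam p0 T))"
  by (induction T) (auto simp: Let_def)

lemma supp_traj:
  assumes "1 \<in> R"
    and cl: "\<And>v b. v \<in> R \<Longrightarrow> b \<in> set_pmf (tx_decision th lam p0 v) \<Longrightarrow> nxt \<alpha> th lam v b \<in> R"
  shows "xs \<in> set_pmf (mp_traj \<alpha> th lam p0 T) \<Longrightarrow> xs \<noteq> [] \<and> fst (last xs) \<in> R
            \<and> snd (last xs) \<in> set_pmf (tx_decision th lam p0 (fst (last xs)))"
proof (induction T arbitrary: xs)
  case 0
  then show ?case using assms(1) by auto
next
  case (Suc T)
  then obtain ys b where ys: "ys \<in> set_pmf (mp_traj \<alpha> th lam p0 T)"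
    and xs: "xs = ys @ [(1 - \<alpha> * (1 - V_hat th lam (fst (last ys)) (snd (last ys))), b)]"
    and b: "b \<in> set_pmf (tx_decision th lam p0 (1 - \<alpha> * (1 - V_hat th lam (fst (last ys)) (snd (last ys)))))"
    by (auto simp: Let_def)
  from Suc.IH[OF ys] have "nxt \<alpha> th lam (fst (last ys)) (snd (last ys)) \<in> R"
    using cl by blast
  then show ?case using xs b by (simp add: nxt_def)
qed

lemma exp_bind_fin:
  fixes h :: "'b \<Rightarrow> real"
  assumes "finite (set_pmf p)" "\<And>x. finite (set_pmf (f x))"
  shows "measure_pmf.expectation (bind_pmf p f) h
       = measure_pmf.expectation p (\<lambda>x. measure_pmf.expectation (f x) h)"
  apply (subst pmf_expectation_bind[of "set_pmf p"])
  using assms apply auto[3]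
  apply (subst integral_measure_pmf[of "set_pmf p"])
  using assms by auto

lemma exp_cong_supp:
  fixes f g :: "'a \<Rightarrow> real"
  assumes "\<And>x. x \<in> set_pmf p \<Longrightarrow> f x = g x"
  shows "measure_pmf.expectation p f = measure_pmf.expectation p g"
  by (rule integral_cong_AE) (auto simp: AE_measure_pmf_iff assms)

lemma poisson_inv:
  fixes g :: "real \<Rightarrow> bool \<Rightarrow> real" and h :: "real \<Rightarrow> real"
  assumes "1 \<in> R"
    and cl: "\<And>v b. v \<in> R \<Longrightarrow> b \<in> set_pmf (tx_decision th lam p0 v) \<Longrightarrow> nxt \<alpha> th lam v b \<in> R"
    and pois: "\<And>v. v \<in> R \<Longrightarrow> measure_pmf.expectation (tx_decision th lam p0 v)
                    (\<lambda>b. g v b + h (nxt \<alpha> th lam v b)) = \<rho> + h v"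
  shows "measure_pmf.expectation (mp_traj \<alpha> th lam p0 T)
           (\<lambda>xs. (\<Sum>x\<leftarrow>xs. g (fst x) (snd x)) + h (nxt \<alpha> th lam (fst (last xs)) (snd (last xs))))
         = real (T + 1) * \<rho> + h 1"
proof (induction T)
  case 0
  then show ?case using pois[OF assms(1)] by simp
next
  case (Suc T)
  let ?S = "\<lambda>xs. (\<Sum>x\<leftarrow>xs. g (fst x) (snd x))"
  let ?v = "\<lambda>xs. nxt \<alpha> th lam (fst (last xs)) (snd (last xs))"
  have fin: "\<And>v. finite (set_pmf (tx_decision th lam p0 v))" by simp
  have "measure_pmf.expectation (mp_traj \<alpha> th lam p0 (Suc T))
           (\<lambda>xs. ?S xs + h (?v xs))
      = measure_pmf.expectation (mp_traj \<alpha> th lam p0 T)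
           (\<lambda>xs. measure_pmf.expectation (tx_decision th lam p0 (?v xs))
               (\<lambda>b. ?S xs + (g (?v xs) b + h (nxt \<alpha> th lam (?v xs) b))))"
    apply (simp only: mp_traj.simps)
    apply (subst exp_bind_fin)
    using fin_traj apply blast
     apply (simp add: Let_def)
    apply (simp add: Let_def nxt_def add_ac)
    done
  also have "\<dots> = measure_pmf.expectation (mp_traj \<alpha> th lam p0 T)
           (\<lambda>xs. ?S xs + h (?v xs) + \<rho>)"
  proof (rule exp_cong_supp)
    fix xs assume xs: "xs \<in> set_pmf (mp_traj \<alpha> th lam p0 T)"
    from supp_traj[OF assms(1) cl xs] have "?v xs \<in> R" using cl by blast
    then show "measure_pmf.expectation (tx_decision th lam p0 (?v xs))
               (\<lambda>b. ?S xs + (g (?v xs) b + h (nxt \<alpha> th lam (?v xs) b))) = ?S xs + h (?v xs) + \<rho>"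
      apply (subst Bochner_Integration.integral_add)
      using integrable_measure_pmf_finite[OF fin] apply auto[2]
      using pois by simp
  qed
  also have "\<dots> = measure_pmf.expectation (mp_traj \<alpha> th lam p0 T)
           (\<lambda>xs. ?S xs + h (?v xs)) + \<rho>"
    apply (subst Bochner_Integration.integral_add)
    using integrable_measure_pmf_finite[OF fin_traj] by auto
  finally show ?case using Suc.IH by (simp add: algebra_simps)
qed

lemma poisson_lim:
  fixes g :: "real \<Rightarrow> bool \<Rightarrow> real" and h :: "real \<Rightarrow> real"
  assumes "finite R" "1 \<in> R"
    and cl: "\<And>v b. v \<in> R \<Longrightarrow> b \<in> set_pmf (tx_decision th lam p0 v) \<Longrightarrow> nxt \<alpha> th lam v b \<in> R"
    and pois: "\<And>v. v \<in> R \<Longrightarrow> measure_pmf.expectation (tx_decision th lam p0 v)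
                    (\<lambda>b. g v b + h (nxt \<alpha> th lam v b)) = \<rho> + h v"
  shows "(\<lambda>T. measure_pmf.expectation (mp_traj \<alpha> th lam p0 T)
           (\<lambda>xs. (\<Sum>x\<leftarrow>xs. g (fst x) (snd x)) / real (T + 1))) \<longlonglongrightarrow> \<rho>"
proof -
  define B where "B = (\<Sum>v\<in>R. \<bar>h v\<bar>)"
  let ?S = "\<lambda>xs. (\<Sum>x\<leftarrow>xs. g (fst x) (snd x))"
  let ?v = "\<lambda>xs. nxt \<alpha> th lam (fst (last xs)) (snd (last xs))"
  define e where "e T = measure_pmf.expectation (mp_traj \<alpha> th lam p0 T) (\<lambda>xs. h (?v xs))" for T
  have hb: "\<bar>h v\<bar> \<le> B" if "v \<in> R" for v
    unfolding B_def using assms(1) that by (intro member_le_sum) auto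
  have eb: "\<bar>e T\<bar> \<le> B" for T
  proof -
    have "\<bar>e T\<bar> \<le> measure_pmf.expectation (mp_traj \<alpha> th lam p0 T) (\<lambda>xs. B)"
      unfolding e_def
      apply (rule order_trans[OF integral_abs_bound])
      apply (rule integral_mono_AE)
      using integrable_measure_pmf_finite[OF fin_traj] apply auto[2]
      apply (auto simp: AE_measure_pmf_iff)
    proof -
      fix y assume "y \<in> set_pmf (mp_traj \<alpha> th lam p0 T)"
      from supp_traj[OF assms(2) cl this] have "?v y \<in> R" using cl by blast
      then show "\<bar>h (?v y)\<bar> \<le> B" using hb by blast
    qed
    then show ?thesis by simp
  qed
  have eq: "measure_pmf.expectation (mp_traj \<alpha> th lam p0 T) (\<lambda>xs. ?S xs / real (T + 1))
        = \<rho> + (h 1 - e T) / real (T + 1)" for T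
  proof -
    have "measure_pmf.expectation (mp_traj \<alpha> th lam p0 T) (\<lambda>xs. ?S xs + h (?v xs))
        = measure_pmf.expectation (mp_traj \<alpha> th lam p0 T) ?S + e T"
      unfolding e_def
      apply (subst Bochner_Integration.integral_add)
      using integrable_measure_pmf_finite[OF fin_traj] by auto
    with poisson_inv[OF assms(2) cl pois, of T] 
    have "measure_pmf.expectation (mp_traj \<alpha> th lam p0 T) ?S = real (T+1) * \<rho> + h 1 - e T"
      by simp
    then show ?thesis
      by (simp add: field_simps)
  qed
  have "(\<lambda>T. (h 1 - e T) / real (T + 1)) \<longlonglongrightarrow> 0"
  proof (rule Lim_null_comparison)
    show "\<forall>\<^sub>F T in sequentially. norm ((h 1 - e T) / real (T + 1)) \<le> (\<bar>h 1\<bar> + B) * inverse (real (Suc T))"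
    proof (rule always_eventually, rule allI)
      fix T
      have "\<bar>h 1 - e T\<bar> \<le> \<bar>h 1\<bar> + B" using eb[of T] by linarith
      then show "norm ((h 1 - e T) / real (T + 1)) \<le> (\<bar>h 1\<bar> + B) * inverse (real (Suc T))"
        by (simp add: divide_inverse abs_mult mult_right_mono)
    qed
    show "(\<lambda>T. (\<bar>h 1\<bar> + B) * inverse (real (Suc T))) \<longlonglongrightarrow> 0"
      by (intro tendsto_mult_right_zero LIMSEQ_inverse_real_of_nat)
  qed
  then have "(\<lambda>T. \<rho> + (h 1 - e T) / real (T + 1)) \<longlonglongrightarrow> \<rho> + 0"
    by (intro tendsto_add tendsto_const)
  then show ?thesis unfolding eq by simp
qed



lemma lam_th_pos: "th > 0 \<Longrightarrow> lam_th th > 0"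
  unfolding lam_th_def by (simp add: add_pos_nonneg) (smt (verit) real_sqrt_ge_zero)

lemma sqrt_lam_th: assumes "th > 0" shows "sqrt (lam_th th * th) = sqrt th / (1 + sqrt th)"
proof -
  have "lam_th th * th = (sqrt th / (1 + sqrt th))^2"
    using assms by (simp add: lam_th_def power_divide)
  then show ?thesis using assms by simp
qed

lemma v_th_lam_th: assumes "th > 0" shows "v_th th (lam_th th) = 1"
proof -
  define s where "s = sqrt th"
  have s: "s > 0" using assms s_def by simp
  have l: "lam_th th = 1 / (1+s)^2" by (simp add: lam_th_def s_def)
  have sl: "sqrt (lam_th th) = 1 / (1+s)" using s by (simp add: l real_sqrt_divide)
  have r: "sqrt (lam_th th * th) = s / (1+s)" using sqrt_lam_th[OF assms] s_def by simp
  have "s / (1+s) + lam_th th / 4 = ((2 * s + 1) / (2 * (1 + s)))^2"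
  proof -
    have "s / (1 + s) + lam_th th / 4 = (4 * s * (1 + s) + 1) / (4 * (1 + s)^2)" using s
      by (simp add: l add_divide_distrib power2_eq_square)
    also have "\<dots> = ((2 * s + 1) / (2 * (1 + s)))^2"
      by (simp add: power_divide power2_eq_square algebra_simps)
    finally show ?thesis .
  qed
  then have q: "sqrt (s / (1+s) + lam_th th / 4) = (2 * s + 1) / (2 * (1 + s))" using s by simp
  have "v_th th (lam_th th) = s / (1 + s) + lam_th th / 2 + 1 / (1 + s) * ((2 * s + 1) / (2 * (1 + s)))"
    unfolding v_th_def r sl q by simp
  also have "\<dots> = 1" using s by (simp add: l divide_simps power2_eq_square) (simp add: algebra_simps)
  finally show ?thesis .
qed

lemma v_th_0: "v_th th 0 = 0" by (simp add: v_th_def)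

lemma v_th_mono: assumes "th > 0" "0 \<le> a" "a < b" shows "v_th th a < v_th th b"
proof -
  have 1: "sqrt (a*th) \<le> sqrt (b*th)" using assms by (intro real_sqrt_le_mono) (simp add: mult_right_mono)
  have 2: "sqrt (sqrt (a * th) + a / 4) \<le> sqrt (sqrt (b * th) + b / 4)" apply (intro real_sqrt_le_mono) using assms 1 by linarith
  have 3: "sqrt a * sqrt (sqrt (a * th) + a / 4) \<le> sqrt b * sqrt (sqrt (b * th) + b / 4)"
    using assms 2 by (intro mult_mono) auto
  show ?thesis unfolding v_th_def using 1 3 assms by linarith
qed

lemma v_th_cont: "continuous_on {0..} (v_th th)"
  unfolding v_th_def by (intro continuous_intros) auto

lemma eta_alt: "eta \<alpha> th j lam = (1 - \<alpha>^j) - (1 - \<alpha>^j) * sqrt (lam * th) - lam / 2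
      - sqrt lam * sqrt (sqrt (lam * th) + lam / 4)"
  unfolding eta_def v_th_def by (simp add: algebra_simps)

lemma eta_mono: assumes "th > 0" "0 \<le> \<alpha>" "\<alpha> < 1" "0 \<le> a" "a < b"
  shows "eta \<alpha> th j b < eta \<alpha> th j a"
proof -
  have p: "0 \<le> 1 - \<alpha>^j" using assms by (simp add: power_le_one)
  have 1: "sqrt (a*th) \<le> sqrt (b*th)" using assms by (intro real_sqrt_le_mono) (simp add: mult_right_mono)
  have 2: "sqrt (sqrt (a * th) + a / 4) \<le> sqrt (sqrt (b * th) + b / 4)" apply (intro real_sqrt_le_mono) using assms 1 by linarith
  have 3: "sqrt a * sqrt (sqrt (a * th) + a / 4) \<le> sqrt b * sqrt (sqrt (b * th) + b / 4)"
    using assms 2 by (intro mult_mono) auto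
  have 4: "(1 - \<alpha>^j) * sqrt (a*th) \<le> (1 - \<alpha>^j) * sqrt (b*th)" using 1 p by (rule mult_left_mono)
  show ?thesis unfolding eta_alt using 3 4 assms by simp
qed

lemma eta_mono': assumes "th > 0" "0 \<le> \<alpha>" "\<alpha> < 1" "0 \<le> a" "a \<le> b"
  shows "eta \<alpha> th j b \<le> eta \<alpha> th j a"
  using eta_mono[OF assms(1-4)] assms(5) by (cases "a = b") (auto intro: less_imp_le)

lemma r_le: assumes "th > 0" "0 \<le> lam" "lam \<le> lam_th th"
  shows "sqrt (lam * th) \<le> sqrt th / (1 + sqrt th)"
proof -
  have "sqrt (lam * th) \<le> sqrt (lam_th th * th)" using assms
    by (intro real_sqrt_le_mono mult_right_mono) auto
  then show ?thesis using sqrt_lam_th[OF assms(1)] by simp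
qed

lemma r_lt1: assumes "th > 0" "0 \<le> lam" "lam \<le> lam_th th"
  shows "sqrt (lam * th) < 1"
  using r_le[OF assms] assms(1) by (smt (verit) divide_less_eq_1_pos real_sqrt_gt_0_iff)

lemma eta_idx: assumes "th > 0" "0 \<le> \<alpha>" "\<alpha> < 1" "0 \<le> lam" "lam \<le> lam_th th" "i \<le> k"
  shows "eta \<alpha> th i lam \<le> eta \<alpha> th k lam"
proof -
  have "\<alpha>^k \<le> \<alpha>^i" using assms by (simp add: power_decreasing)
  moreover have "0 \<le> 1 - sqrt (lam*th)" using r_lt1[OF assms(1,4,5)] by simp
  ultimately show ?thesis unfolding eta_def by (simp add: mult_right_mono)
qed

lemma eta_idx_strict: assumes "th > 0" "0 < \<alpha>" "\<alpha> < 1" "0 \<le> lam" "lam \<le> lam_th th" "i < k"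
  shows "eta \<alpha> th i lam < eta \<alpha> th k lam"
proof -
  have "\<alpha>^k < \<alpha>^i" using assms by (simp add: power_strict_decreasing)
  moreover have "0 < 1 - sqrt (lam*th)" using r_lt1[OF assms(1,4,5)] by simp
  ultimately show ?thesis unfolding eta_def by (simp add: mult_strict_right_mono)
qed

lemma eta_0: "eta \<alpha> th j 0 = 1 - \<alpha>^j" by (simp add: eta_def v_th_def)

lemma eta_lam_th: "th > 0 \<Longrightarrow> eta \<alpha> th j (lam_th th) = - (\<alpha>^j) * (1 - sqrt th / (1 + sqrt th))"
  by (simp add: eta_def v_th_lam_th sqrt_lam_th)

lemma eta_cont: "continuous_on {0..lam_th th} (eta \<alpha> th j)"
  unfolding eta_def v_th_def by (intro continuous_intros) auto

lemma lam_star_unique: assumes "th > 0" "0 \<le> \<alpha>" "\<alpha> < 1"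
  "0 \<le> x" "x \<le> lam_th th" "eta \<alpha> th j x = 0"
  shows "lam_star \<alpha> th j = x"
  unfolding lam_star_def
proof (rule the_equality)
  show "x \<in> {0..lam_th th} \<and> eta \<alpha> th j x = 0" using assms by auto
  fix y assume y: "y \<in> {0..lam_th th} \<and> eta \<alpha> th j y = 0"
  show "y = x"
  proof (rule ccontr)
    assume "y \<noteq> x"
    then have "y < x \<or> x < y" by linarith
    then show False using eta_mono[OF assms(1-3)] y assms by (metis atLeastAtMost_iff less_irrefl)
  qed
qed

lemma lam_star_prop: assumes "th > 0" "0 \<le> \<alpha>" "\<alpha> < 1"
  shows "0 \<le> lam_star \<alpha> th j \<and> lam_star \<alpha> th j \<le> lam_th th \<and> eta \<alpha> th j (lam_star \<alpha> th j) = 0"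
proof -
  have a: "eta \<alpha> th j (lam_th th) \<le> 0"
    using assms by (simp add: eta_lam_th) (smt (verit) divide_less_eq_1_pos mult_nonneg_nonneg real_sqrt_gt_0_iff zero_le_power)
  have b: "0 \<le> eta \<alpha> th j 0" using assms by (simp add: eta_0 power_le_one)
  obtain x where x: "0 \<le> x" "x \<le> lam_th th" "eta \<alpha> th j x = 0"
    using IVT2'[of "eta \<alpha> th j" "lam_th th" 0 0, OF a b _ eta_cont] lam_th_pos[OF assms(1)] by auto
  then show ?thesis using lam_star_unique[OF assms x] by simp
qed

lemma lam_star_0: assumes "th > 0" "0 \<le> \<alpha>" "\<alpha> < 1" shows "lam_star \<alpha> th 0 = 0"
  by (rule lam_star_unique[OF assms]) (auto simp: eta_0 lam_th_pos[OF assms(1)] less_imp_le)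

lemma lam_star_alpha0: assumes "th > 0" "j \<ge> 1" shows "lam_star 0 th j = lam_th th"
  by (rule lam_star_unique[OF assms(1)]) (use assms lam_th_pos[OF assms(1)] in \<open>auto simp: eta_lam_th\<close>)

lemma lam_star_pos: assumes "th > 0" "0 < \<alpha>" "\<alpha> < 1" "j \<ge> 1"
  shows "0 < lam_star \<alpha> th j \<and> lam_star \<alpha> th j < lam_th th"
proof -
  note p = lam_star_prop[OF assms(1) _ assms(3), of j] 
  have "\<alpha>^j < \<alpha>^0" using assms by (intro power_strict_decreasing) auto
  then have "lam_star \<alpha> th j \<noteq> 0" using p assms eta_0[of \<alpha> th j] by auto
  moreover have "lam_star \<alpha> th j \<noteq> lam_th th"
  proof
    assume "lam_star \<alpha> th j = lam_th th"
    then have "eta \<alpha> th j (lam_th th) = 0" using p assms by simp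
    moreover have "sqrt th / (1 + sqrt th) < 1" using assms by (smt (verit) divide_less_eq_1_pos real_sqrt_ge_zero)
    ultimately show False using assms by (simp add: eta_lam_th)
  qed
  ultimately show ?thesis using p assms by auto
qed

lemma lam_star_strict: assumes "th > 0" "0 < \<alpha>" "\<alpha> < 1"
  shows "lam_star \<alpha> th j < lam_star \<alpha> th (Suc j)"
proof (rule ccontr)
  assume "\<not> ?thesis"
  then have le: "lam_star \<alpha> th (Suc j) \<le> lam_star \<alpha> th j" by simp
  note pj = lam_star_prop[OF assms(1) _ assms(3), of j] and ps = lam_star_prop[OF assms(1) _ assms(3), of "Suc j"]
  have "eta \<alpha> th j (lam_star \<alpha> th j) < eta \<alpha> th (Suc j) (lam_star \<alpha> th j)"
    using eta_idx_strict[OF assms, of "lam_star \<alpha> th j" j "Suc j"] pj assms by auto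
  also have "\<dots> \<le> eta \<alpha> th (Suc j) (lam_star \<alpha> th (Suc j))"
    using eta_mono'[OF assms(1) _ assms(3), of "lam_star \<alpha> th (Suc j)" "lam_star \<alpha> th j" "Suc j"] ps le assms by auto
  finally show False using pj ps assms by simp
qed



definition uu :: "real \<Rightarrow> real \<Rightarrow> real \<Rightarrow> nat \<Rightarrow> real" where
  "uu \<alpha> th lam i = 1 - \<alpha>^i * (1 - sqrt (lam * th))"

lemma eta_uu: "eta \<alpha> th i lam = uu \<alpha> th lam i - v_th th lam"
  by (simp add: eta_def uu_def)

definition rho :: "(real \<Rightarrow> bool \<Rightarrow> real) \<Rightarrow> real \<Rightarrow> real \<Rightarrow> real \<Rightarrow> nat \<Rightarrow> real \<Rightarrow> real" where
  "rho g \<alpha> th lam j q = ((\<Sum>i\<in>{1..<j}. g (uu \<alpha> th lam i) False) + q * g (uu \<alpha> th lam j) True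
      + (1 - q) * (g (uu \<alpha> th lam j) False + g (uu \<alpha> th lam (Suc j)) True)) / (real j + 1 - q)"

lemma V_hat_F[simp]: "V_hat th lam v False = v"
  by (simp add: V_hat_def t_ind_def S_M_def)

lemma V_hat_T: "v > 0 \<Longrightarrow> sqrt (lam * th) > 0 \<Longrightarrow> V_hat th lam v True = sqrt (lam * th)"
  by (simp add: V_hat_def t_ind_def S_M_def field_simps)

lemma dec_gt: "v_th th lam < v \<Longrightarrow> tx_decision th lam p0 v = return_pmf True"
  by (simp add: tx_decision_def)
lemma dec_lt: "v < v_th th lam \<Longrightarrow> tx_decision th lam p0 v = return_pmf False"
  by (simp add: tx_decision_def)
lemma dec_eq: "v = v_th th lam \<Longrightarrow> tx_decision th lam p0 v = bernoulli_pmf p0"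
  by (simp add: tx_decision_def)

lemma v_th_lt1: "th > 0 \<Longrightarrow> 0 \<le> lam \<Longrightarrow> lam < lam_th th \<Longrightarrow> v_th th lam < 1"
  using v_th_mono[of th lam "lam_th th"] v_th_lam_th by simp

lemma block:
  fixes g :: "real \<Rightarrow> bool \<Rightarrow> real"
  assumes th: "th > 0" and al: "0 < \<alpha>" "\<alpha> < 1" and lam: "0 < lam" "lam < lam_th th"
    and j: "1 \<le> j" and p0: "0 \<le> p0" "p0 \<le> 1"
    and below: "\<And>i. 1 \<le> i \<Longrightarrow> i < j \<Longrightarrow> uu \<alpha> th lam i < v_th th lam"
    and above: "v_th th lam < uu \<alpha> th lam (Suc j)"
    and at: "(v_th th lam < uu \<alpha> th lam j \<and> q = 1) \<or> (uu \<alpha> th lam j = v_th th lam \<and> q = p0)"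
  shows "(\<lambda>T. measure_pmf.expectation (mp_traj \<alpha> th lam p0 T)
           (\<lambda>xs. (\<Sum>x\<leftarrow>xs. g (fst x) (snd x)) / real (T + 1))) \<longlonglongrightarrow> rho g \<alpha> th lam j q"
proof -
  define u where "u = uu \<alpha> th lam"
  define r where "r = sqrt (lam * th)"
  have r0: "r > 0" using th lam by (simp add: r_def)
  have r1: "r < 1" unfolding r_def using r_lt1[OF th] lam by simp
  have apos: "\<alpha>^i > 0" for i using al by simp
  have ule1: "u i < 1" for i using apos[of i] r1 by (simp add: u_def uu_def r_def[symmetric])
  have ugr: "u i \<ge> r" for i
  proof -
    have "\<alpha>^i \<le> 1" using al by (simp add: power_le_one)
    then have "\<alpha>^i * (1 - r) \<le> 1 * (1 - r)" using r1 by (intro mult_right_mono) auto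
    then show ?thesis by (simp add: u_def uu_def r_def[symmetric])
  qed
  have upos: "u i > 0" for i using ugr[of i] r0 by linarith
  have uinj: "u a = u b \<longleftrightarrow> a = b" for a b
  proof
    assume e: "u a = u b"
    show "a = b"
    proof (rule ccontr)
      assume "a \<noteq> b"
      then have "\<alpha>^a \<noteq> \<alpha>^b" using al power_strict_decreasing[of _ _ \<alpha>]
        by (metis less_irrefl nat_neq_iff)
      then show False using e r1 by (simp add: u_def uu_def r_def[symmetric])
    qed
  qed simp
  have vth1: "v_th th lam < 1" using v_th_lt1[OF th] lam by simp
  have nF: "nxt \<alpha> th lam (u i) False = u (Suc i)" for i
    by (simp add: nxt_def u_def uu_def algebra_simps)
  have nT: "v > 0 \<Longrightarrow> nxt \<alpha> th lam v True = u 1" for v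
    using V_hat_T[of v lam th] r0 by (simp add: nxt_def u_def uu_def r_def)
  have n1F: "nxt \<alpha> th lam 1 False = 1" by (simp add: nxt_def)
  define \<rho> where "\<rho> = rho g \<alpha> th lam j q"
  define c where "c k = (if k \<le> j then (\<Sum>i\<in>{1..<k}. (\<rho> - g (u i) False)) else g (u (Suc j)) True - \<rho>)" for k
  define h where "h v = (if v = 1 then g 1 True - \<rho> else (\<Sum>i\<in>{1..Suc j}. if v = u i then c i else 0))" for v
  have hu: "h (u k) = c k" if "1 \<le> k" "k \<le> Suc j" for k
  proof -
    have "h (u k) = (\<Sum>i\<in>{1..Suc j}. if k = i then c i else 0)"
      unfolding h_def using ule1[of k] by (simp add: uinj)
    also have "\<dots> = c k" using that by (simp add: sum.delta)
    finally show ?thesis .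
  qed
  have c1: "c 1 = 0" using j by (simp add: c_def)
  define R where "R = insert 1 (u ` {1..Suc j})"
  have D: "real j + 1 - q > 0" using at j p0 by auto
  have rhoeq: "\<rho> * (real j + 1 - q) = (\<Sum>i\<in>{1..<j}. g (u i) False) + q * g (u j) True
      + (1 - q) * (g (u j) False + g (u (Suc j)) True)"
    unfolding \<rho>_def rho_def u_def using D by simp
  show ?thesis unfolding \<rho>_def[symmetric]
  proof (rule poisson_lim[of R _ _ _ _ _ h])
    show "finite R" by (simp add: R_def)
    show "1 \<in> R" by (simp add: R_def)
  next
    fix v b assume v: "v \<in> R" and b: "b \<in> set_pmf (tx_decision th lam p0 v)"
    show "nxt \<alpha> th lam v b \<in> R"
    proof (cases b)
      case True
      then show ?thesis using v upos nT j by (auto simp: R_def)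
    next
      case False
      show ?thesis
      proof (cases "v = 1")
        case True then show ?thesis using False n1F by (simp add: R_def)
      next
        case v1: False
        then obtain k where k: "1 \<le> k" "k \<le> Suc j" "v = u k" using v by (auto simp: R_def)
        have "k \<noteq> Suc j"
        proof
          assume "k = Suc j"
          then have "tx_decision th lam p0 v = return_pmf True" using k above dec_gt u_def by simp
          then show False using b False by simp
        qed
        then show ?thesis using k False nF by (auto simp: R_def)
      qed
    qed
  next
    fix v assume v: "v \<in> R"
    show "measure_pmf.expectation (tx_decision th lam p0 v) (\<lambda>b. g v b + h (nxt \<alpha> th lam v b)) = \<rho> + h v"
    proof (cases "v = 1")
      case True
      then have "tx_decision th lam p0 v = return_pmf True" using vth1 dec_gt by simp
      moreover have "h 1 = g 1 True - \<rho>" by (simp add: h_def)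
      ultimately show ?thesis using True nT[of 1] hu[of 1] c1 j by simp
    next
      case v1: False
      then obtain k where k: "1 \<le> k" "k \<le> Suc j" "v = u k" using v by (auto simp: R_def)
      consider "k < j" | "k = j" | "k = Suc j" using k by linarith
      then show ?thesis
      proof cases
        case 1
        then have "tx_decision th lam p0 v = return_pmf False" using below k dec_lt u_def by simp
        moreover have "c (Suc k) = c k + (\<rho> - g (u k) False)"
          using 1 k by (simp add: c_def)
        ultimately show ?thesis using k 1 hu[of k] hu[of "Suc k"] nF by simp
      next
        case 2
        have hj1: "h (u (Suc j)) = g (u (Suc j)) True - \<rho>" using hu[of "Suc j"] j by (simp add: c_def)
        have hj: "h (u j) = (real j - 1) * \<rho> - (\<Sum>i\<in>{1..<j}. g (u i) False)"
          using hu[of j] j by (simp add: c_def sum_subtractf of_nat_diff)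
        have hu1: "h (u 1) = 0" using hu[of 1] c1 j by simp
        have E: "measure_pmf.expectation (tx_decision th lam p0 v) (\<lambda>b. g v b + h (nxt \<alpha> th lam v b))
            = q * (g v True + h (u 1)) + (1 - q) * (g v False + h (u (Suc j)))"
          using at
        proof
          assume a: "v_th th lam < uu \<alpha> th lam j \<and> q = 1"
          then have "tx_decision th lam p0 v = return_pmf True" using k 2 dec_gt u_def by simp
          then show ?thesis using a k upos nT by simp
        next
          assume a: "uu \<alpha> th lam j = v_th th lam \<and> q = p0"
          then have "tx_decision th lam p0 v = bernoulli_pmf p0" using k 2 dec_eq u_def by simp
          then show ?thesis using a k 2 upos nT nF p0 by (simp add: algebra_simps)
        qed
        have "v = u j" using k 2 by simp
        then show ?thesis unfolding E hj1 hu1 using rhoeq hj by (simp add: algebra_simps)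
      next
        case 3
        then have "tx_decision th lam p0 v = return_pmf True" using above k dec_gt u_def by simp
        then show ?thesis using k 3 upos nT hu[of 1] c1 hu[of "Suc j"] j by (simp add: c_def)
      qed
    qed
  qed
qed



lemma alpha0_open:
  fixes g :: "real \<Rightarrow> bool \<Rightarrow> real"
  assumes th: "th > 0" and lam: "0 < lam" "lam < lam_th th"
  shows "(\<lambda>T. measure_pmf.expectation (mp_traj 0 th lam p0 T)
           (\<lambda>xs. (\<Sum>x\<leftarrow>xs. g (fst x) (snd x)) / real (T + 1))) \<longlonglongrightarrow> g 1 True"
proof -
  have d: "tx_decision th lam p0 1 = return_pmf True"
    using v_th_lt1[OF th] lam dec_gt by simp
  show ?thesis
    by (rule poisson_lim[of "{1}" _ _ _ _ _ "\<lambda>_. 0"]) (auto simp: d nxt_def)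
qed

lemma alpha0_th:
  fixes g :: "real \<Rightarrow> bool \<Rightarrow> real"
  assumes th: "th > 0" and p: "0 \<le> p0" "p0 \<le> 1"
  shows "(\<lambda>T. measure_pmf.expectation (mp_traj 0 th (lam_th th) p0 T)
           (\<lambda>xs. (\<Sum>x\<leftarrow>xs. g (fst x) (snd x)) / real (T + 1))) \<longlonglongrightarrow> p0 * g 1 True + (1 - p0) * g 1 False"
proof -
  have d: "tx_decision th (lam_th th) p0 1 = bernoulli_pmf p0"
    using v_th_lam_th[OF th] dec_eq[of 1 th "lam_th th" p0] by simp
  show ?thesis
    by (rule poisson_lim[of "{1}" _ _ _ _ _ "\<lambda>_. 0"]) (use p in \<open>auto simp: d nxt_def\<close>)
qed

definition Mf :: "real \<Rightarrow> real \<Rightarrow> real \<Rightarrow> nat \<Rightarrow> real \<Rightarrow> real" where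
  "Mf \<alpha> th lam j q = ((\<Sum>i\<in>{1..<j}. uu \<alpha> th lam i) + sqrt (lam * th) + (1 - q) * uu \<alpha> th lam j)
      / (real j + 1 - q)"

definition cc :: "real \<Rightarrow> real \<Rightarrow> nat \<Rightarrow> real \<Rightarrow> real \<Rightarrow> real \<Rightarrow> real" where
  "cc cTX \<phi> NS th lam v = 1 / real NS * (cTX + \<phi> * (1 / sqrt (lam * th) - 1 / v))"

definition Cf :: "real \<Rightarrow> real \<Rightarrow> real \<Rightarrow> real \<Rightarrow> nat \<Rightarrow> real \<Rightarrow> nat \<Rightarrow> real \<Rightarrow> real" where
  "Cf \<alpha> th cTX \<phi> NS lam j q = (q * cc cTX \<phi> NS th lam (uu \<alpha> th lam j)
      + (1 - q) * cc cTX \<phi> NS th lam (uu \<alpha> th lam (Suc j))) / (real j + 1 - q)"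

lemma uu_ge_r: assumes "0 \<le> \<alpha>" "\<alpha> < 1" "th > 0" "0 \<le> lam" "lam \<le> lam_th th"
  shows "sqrt (lam * th) \<le> uu \<alpha> th lam i"
proof -
  have r1: "sqrt (lam*th) < 1" using r_lt1 assms by simp
  have "\<alpha>^i \<le> 1" using assms by (simp add: power_le_one)
  then have "\<alpha>^i * (1 - sqrt (lam*th)) \<le> 1 * (1 - sqrt (lam*th))" using r1 by (intro mult_right_mono) auto
  then show ?thesis by (simp add: uu_def)
qed

lemma uu_pos: assumes "0 \<le> \<alpha>" "\<alpha> < 1" "th > 0" "0 < lam" "lam \<le> lam_th th"
  shows "0 < uu \<alpha> th lam i"
  using uu_ge_r[of \<alpha> th lam i] assms by (smt (verit) mult_pos_pos real_sqrt_gt_0_iff)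

lemma rho_M: assumes "0 \<le> \<alpha>" "\<alpha> < 1" "th > 0" "0 < lam" "lam \<le> lam_th th"
  shows "rho (V_hat th lam) \<alpha> th lam j q = Mf \<alpha> th lam j q"
proof -
  have "V_hat th lam (uu \<alpha> th lam k) True = sqrt (lam * th)" for k
    using uu_pos[OF assms] assms by (intro V_hat_T) auto
  then show ?thesis unfolding rho_def Mf_def by (simp add: algebra_simps)
qed

lemma rho_C: assumes "0 \<le> \<alpha>" "\<alpha> < 1" "th > 0" "0 < lam" "lam \<le> lam_th th"
  shows "rho (\<lambda>v b. 1 / real NS * t_ind b * (cTX + \<phi> * S_M th lam v b)) \<alpha> th lam j q
       = Cf \<alpha> th cTX \<phi> NS lam j q"
  unfolding rho_def Cf_def cc_def by (simp add: t_ind_def S_M_def)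

lemma M_block:
  assumes "cTX > 0" "\<phi> > 0" and th: "th = \<phi> / cTX" and al: "0 < \<alpha>" "\<alpha> < 1" and lam: "0 < lam" "lam < lam_th th"
    and j: "1 \<le> j" and p0: "0 \<le> p0" "p0 \<le> 1"
    and below: "\<And>i. 1 \<le> i \<Longrightarrow> i < j \<Longrightarrow> uu \<alpha> th lam i < v_th th lam"
    and above: "v_th th lam < uu \<alpha> th lam (Suc j)"
    and at: "(v_th th lam < uu \<alpha> th lam j \<and> q = 1) \<or> (uu \<alpha> th lam j = v_th th lam \<and> q = p0)"
  shows "M_MP \<alpha> cTX \<phi> lam p0 = Mf \<alpha> th lam j q" "C_MP \<alpha> cTX \<phi> NS lam p0 = Cf \<alpha> th cTX \<phi> NS lam j q"
proof -
  have th0: "th > 0" using assms by simp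
  note b = block[OF th0 al lam j p0 below above at]
  show "M_MP \<alpha> cTX \<phi> lam p0 = Mf \<alpha> th lam j q"
    unfolding M_MP_def th[symmetric]
    using limI[OF b[of "V_hat th lam"]] rho_M[of \<alpha> th lam j q] al th0 lam by simp
  show "C_MP \<alpha> cTX \<phi> NS lam p0 = Cf \<alpha> th cTX \<phi> NS lam j q"
    unfolding C_MP_def th[symmetric]
    using limI[OF b[of "\<lambda>v b. 1 / real NS * t_ind b * (cTX + \<phi> * S_M th lam v b)"]]
      rho_C[of \<alpha> th lam NS cTX \<phi> j q] al th0 lam by simp
qed

lemma M_zero_open:
  assumes "cTX > 0" "\<phi> > 0" and th: "th = \<phi> / cTX" and lam: "0 < lam" "lam < lam_th th"
  shows "M_MP 0 cTX \<phi> lam p0 = Mf 0 th lam 1 1" "C_MP 0 cTX \<phi> NS lam p0 = Cf 0 th cTX \<phi> NS lam 1 1"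
proof -
  have th0: "th > 0" using assms by simp
  note b = alpha0_open[OF th0 lam]
  have r: "sqrt (lam * th) > 0" using th0 lam by simp
  show "M_MP 0 cTX \<phi> lam p0 = Mf 0 th lam 1 1"
    unfolding M_MP_def th[symmetric]
    using limI[OF b[of p0 "V_hat th lam"]] V_hat_T[of 1 lam th] r by (simp add: Mf_def uu_def)
  show "C_MP 0 cTX \<phi> NS lam p0 = Cf 0 th cTX \<phi> NS lam 1 1"
    unfolding C_MP_def th[symmetric]
    using limI[OF b[of p0 "\<lambda>v b. 1 / real NS * t_ind b * (cTX + \<phi> * S_M th lam v b)"]]
    by (simp add: Cf_def cc_def uu_def t_ind_def S_M_def)
qed

lemma M_zero_th:
  assumes "cTX > 0" "\<phi> > 0" and th: "th = \<phi> / cTX" and p: "0 \<le> p0" "p0 \<le> 1"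
  shows "M_MP 0 cTX \<phi> (lam_th th) p0 = p0 * sqrt (lam_th th * th) + (1 - p0)"
        "C_MP 0 cTX \<phi> NS (lam_th th) p0 = p0 * cc cTX \<phi> NS th (lam_th th) 1"
proof -
  have th0: "th > 0" using assms by simp
  note b = alpha0_th[OF th0 p]
  have r: "sqrt (lam_th th * th) > 0" using th0 lam_th_pos[OF th0] by simp
  show "M_MP 0 cTX \<phi> (lam_th th) p0 = p0 * sqrt (lam_th th * th) + (1 - p0)"
    unfolding M_MP_def th[symmetric]
    using limI[OF b[of "V_hat th (lam_th th)"]] V_hat_T[of 1 "lam_th th" th] r by simp
  show "C_MP 0 cTX \<phi> NS (lam_th th) p0 = p0 * cc cTX \<phi> NS th (lam_th th) 1"
    unfolding C_MP_def th[symmetric]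
    using limI[OF b[of "\<lambda>v b. 1 / real NS * t_ind b * (cTX + \<phi> * S_M th (lam_th th) v b)"]]
    by (simp add: cc_def t_ind_def S_M_def)
qed



lemma Mf_cont: "real j + 1 - q \<noteq> 0 \<Longrightarrow> isCont (\<lambda>l. Mf \<alpha> th l j q) x"
  unfolding Mf_def uu_def by (intro continuous_intros) auto

lemma uu_cont: "isCont (\<lambda>l. uu \<alpha> th l k) x"
  unfolding uu_def by (intro continuous_intros)

lemma Cf_cont: assumes "0 \<le> \<alpha>" "\<alpha> < 1" "th > 0" "0 < x" "x \<le> lam_th th" "real j + 1 - q \<noteq> 0"
  shows "isCont (\<lambda>l. Cf \<alpha> th cTX \<phi> NS l j q) x"
proof -
  have s0: "sqrt (x * th) \<noteq> 0" using assms by simp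
  have u0: "uu \<alpha> th x k \<noteq> 0" for k using uu_pos[of \<alpha> th x k] assms by simp
  have c: "isCont (\<lambda>l. cc cTX \<phi> NS th l (uu \<alpha> th l k)) x" for k
    unfolding cc_def by (intro continuous_intros uu_cont s0 u0)
  show ?thesis unfolding Cf_def
    by (intro continuous_intros c assms(6))
qed

lemma Mf_cont_q: assumes "1 \<le> j" shows "continuous_on {0..1} (\<lambda>q. Mf \<alpha> th lam j q)"
proof -
  have nz: "\<forall>q\<in>{0..1::real}. real j + 1 - q \<noteq> 0" using assms by auto
  show ?thesis unfolding Mf_def
    by (rule continuous_on_divide[OF _ _ nz]) (intro continuous_intros)+
qed

lemma Cf_cont_q: assumes "1 \<le> j" shows "continuous_on {0..1} (\<lambda>q. Cf \<alpha> th cTX \<phi> NS lam j q)"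
proof -
  have nz: "\<forall>q\<in>{0..1::real}. real j + 1 - q \<noteq> 0" using assms by auto
  show ?thesis unfolding Cf_def
    by (rule continuous_on_divide[OF _ _ nz]) (intro continuous_intros)+
qed

lemma Mf_shift: "1 \<le> j \<Longrightarrow> Mf \<alpha> th lam j 0 = Mf \<alpha> th lam (Suc j) 1"
  unfolding Mf_def by (simp add: sum.atLeastLessThan_Suc algebra_simps)

lemma Cf_shift: "Cf \<alpha> th cTX \<phi> NS lam j 0 = Cf \<alpha> th cTX \<phi> NS lam (Suc j) 1"
  unfolding Cf_def by (simp add: algebra_simps)

lemma uu_mono_lam: assumes "0 \<le> \<alpha>" "th > 0" "0 \<le> a" "a \<le> b"
  shows "uu \<alpha> th a i \<le> uu \<alpha> th b i"
proof -
  have "sqrt (a*th) \<le> sqrt (b*th)" using assms by (intro real_sqrt_le_mono mult_right_mono) auto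
  then show ?thesis unfolding uu_def using assms by (simp add: mult_left_mono algebra_simps)
qed

lemma Mf_mono_lam: assumes "0 \<le> \<alpha>" "th > 0" "0 \<le> a" "a < b" "1 \<le> j"
  shows "Mf \<alpha> th a j 1 < Mf \<alpha> th b j 1"
proof -
  have s: "(\<Sum>i\<in>{1..<j}. uu \<alpha> th a i) \<le> (\<Sum>i\<in>{1..<j}. uu \<alpha> th b i)"
    using uu_mono_lam[of \<alpha> th a b] assms by (intro sum_mono) auto
  have r: "sqrt (a*th) < sqrt (b*th)" using assms by simp
  have "(\<Sum>i\<in>{1..<j}. uu \<alpha> th a i) + sqrt (a*th) < (\<Sum>i\<in>{1..<j}. uu \<alpha> th b i) + sqrt (b*th)"
    using s r by linarith
  then show ?thesis unfolding Mf_def using assms by (simp add: divide_strict_right_mono)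
qed

lemma key_dec: fixes r1 r2 A :: real assumes "0 < r1" "r1 < r2" "r2 \<le> 1" "0 \<le> A" "A < 1"
  shows "1/r2 - 1/(1 - A + A*r2) < 1/r1 - 1/(1 - A + A*r1)"
proof -
  define u1 where "u1 = 1 - A + A*r1"
  define u2 where "u2 = 1 - A + A*r2"
  have "0 \<le> (1-A)*(1-r1)" using assms by (simp add: zero_le_mult_iff)
  moreover have "0 \<le> (1-A)*(1-r2)" using assms by (simp add: zero_le_mult_iff)
  moreover have "(1-A)*(1-r1) = u1 - r1" "(1-A)*(1-r2) = u2 - r2"
    unfolding u1_def u2_def by (simp_all add: algebra_simps)
  ultimately have u1: "u1 \<ge> r1" and u2: "u2 \<ge> r2" by linarith+
  have p: "0 < r1 * r2" using assms by simp
  have "A * (r1 * r2) < r1 * r2" using p assms by simp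
  also have "r1 * r2 \<le> u1 * u2" using u1 u2 assms by (intro mult_mono) auto
  finally have k: "A * (r1 * r2) < u1 * u2" .
  have e1: "1/r1 - 1/r2 = (r2 - r1) / (r1*r2)" using assms by (simp add: field_simps)
  have e2: "1/u1 - 1/u2 = A * (r2 - r1) / (u1*u2)" using assms u1 u2
    by (simp add: field_simps u1_def u2_def)
  have uu: "0 < u1 * u2" using u1 u2 assms by (intro mult_pos_pos) auto
  have "A / (u1*u2) < 1 / (r1*r2)" using k uu p by (simp add: divide_simps)
  then have "(r2 - r1) * (A / (u1*u2)) < (r2 - r1) * (1 / (r1*r2))"
    using assms by (intro mult_strict_left_mono) auto
  then have "A * (r2 - r1) / (u1*u2) < (r2 - r1) / (r1*r2)" by (simp add: mult.commute)
  then show ?thesis using e1 e2 unfolding u1_def u2_def by linarith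
qed

lemma Cf_mono_lam: assumes "0 \<le> \<alpha>" "\<alpha> < 1" "th > 0" "0 < a" "a < b" "b \<le> lam_th th" "1 \<le> j"
    "NS > 0" "\<phi> > 0"
  shows "Cf \<alpha> th cTX \<phi> NS b j 1 < Cf \<alpha> th cTX \<phi> NS a j 1"
proof -
  define A where "A = \<alpha>^j"
  have "\<alpha>^j < 1^j" using assms by (intro power_strict_mono) auto
  then have A: "0 \<le> A" "A < 1" using assms unfolding A_def by auto
  have "A < 1" using A by simp
  have r1: "sqrt (b*th) \<le> 1" using r_lt1[of th b] assms by simp
  have kd: "1/sqrt (b*th) - 1/(1 - A + A* sqrt (b*th)) < 1/sqrt (a*th) - 1/(1 - A + A* sqrt (a*th))"
    using assms A r1 by (intro key_dec) auto
  have ueq: "uu \<alpha> th l j = 1 - A + A * sqrt (l * th)" for l by (simp add: uu_def A_def algebra_simps)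
  have X: "1/sqrt (b * th) - 1/uu \<alpha> th b j < 1/sqrt (a * th) - 1/uu \<alpha> th a j"
    using kd by (simp only: ueq)
  then have "\<phi> * (1/sqrt (b * th) - 1/uu \<alpha> th b j) < \<phi> * (1/sqrt (a * th) - 1/uu \<alpha> th a j)"
    using assms by (intro mult_strict_left_mono) auto
  then have "cTX + \<phi> * (1/sqrt (b * th) - 1/uu \<alpha> th b j) < cTX + \<phi> * (1/sqrt (a * th) - 1/uu \<alpha> th a j)"
    by simp
  then have "cc cTX \<phi> NS th b (uu \<alpha> th b j) < cc cTX \<phi> NS th a (uu \<alpha> th a j)"
    unfolding cc_def using assms by (intro mult_strict_left_mono) auto
  then show ?thesis unfolding Cf_def using assms by (simp add: divide_strict_right_mono)
qed

lemma pow_ineq: assumes "0 \<le> a" "a \<le> 1" shows "real j * a^j * (1 - a) \<le> 1 - a^j"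
proof (induction j)
  case 0 then show ?case by simp
next
  case (Suc j)
  have a1: "a^(Suc j) \<le> 1" using assms by (rule power_le_one)
  have "real (Suc j) * a^(Suc j) * (1 - a) = a * (real j * a^j * (1 - a)) + a^(Suc j) * (1 - a)"
    by (simp add: algebra_simps)
  also have "\<dots> \<le> a * (1 - a^j) + a^(Suc j) * (1 - a)"
    by (rule add_right_mono, rule mult_left_mono) (use Suc assms in auto)
  also have "\<dots> \<le> 1 - a^(Suc j)"
  proof -
    have "a^(Suc j) * (1 - a) \<le> 1 * (1 - a)" apply (rule mult_right_mono) using a1 assms by auto
    then show ?thesis by (simp add: algebra_simps)
  qed
  finally show ?case .
qed

lemma Mf_mono_q: assumes "0 < \<alpha>" "\<alpha> < 1" "th > 0" "0 < lam" "lam \<le> lam_th th" "1 \<le> j"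
    "0 \<le> q1" "q1 < q2" "q2 \<le> 1"
  shows "Mf \<alpha> th lam j q2 < Mf \<alpha> th lam j q1"
proof -
  define U where "U = uu \<alpha> th lam j"
  define r where "r = sqrt (lam * th)"
  define S where "S = (\<Sum>i\<in>{1..<j}. uu \<alpha> th lam i) + r"
  have r1: "r < 1" using r_lt1[of th lam] assms r_def by simp
  have ui: "uu \<alpha> th lam i \<le> U" if "i < j" for i
  proof -
    have "\<alpha>^j \<le> \<alpha>^i" using that assms by (simp add: power_decreasing)
    then show ?thesis unfolding U_def uu_def using r1 r_def by (simp add: mult_right_mono)
  qed
  have rU: "r < U"
  proof -
    have "\<alpha>^j < 1" using assms power_strict_decreasing[of 0 j \<alpha>] by simp
    then have "\<alpha>^j * (1 - r) < 1 * (1 - r)" using r1 by (intro mult_strict_right_mono) auto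
    then show ?thesis unfolding U_def uu_def r_def[symmetric] by simp
  qed
  have "(\<Sum>i\<in>{1..<j}. uu \<alpha> th lam i) \<le> (\<Sum>i\<in>{1..<j}. U)" using ui by (intro sum_mono) auto
  then have "(\<Sum>i\<in>{1..<j}. uu \<alpha> th lam i) \<le> (real j - 1) * U" using assms by (simp add: of_nat_diff)
  then have SU: "S < real j * U" unfolding S_def using rU by (simp add: algebra_simps)
  define t1 where "t1 = 1 - q1"
  define t2 where "t2 = 1 - q2"
  have t: "t2 < t1" "0 \<le> t2" using assms t1_def t2_def by auto
  have d1: "real j + t1 > 0" "real j + t2 > 0" using t assms by auto
  have id: "(S + t1*U) * (real j + t2) - (S + t2*U) * (real j + t1) = (t1 - t2) * (real j * U - S)"
    by (simp add: algebra_simps)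
  have "0 < (t1 - t2) * (real j * U - S)" using t SU by simp
  then have "(S + t2*U) * (real j + t1) < (S + t1*U) * (real j + t2)" using id by linarith
  then have "(S + t2*U) / (real j + t2) < (S + t1*U) / (real j + t1)"
    using d1 by (simp add: divide_simps)
  then show ?thesis unfolding Mf_def S_def U_def t1_def t2_def r_def by (simp add: algebra_simps)
qed

lemma Cf_mono_q: assumes "0 < \<alpha>" "\<alpha> < 1" "th > 0" "0 < lam" "lam \<le> lam_th th" "1 \<le> j"
    "0 \<le> q1" "q1 < q2" "q2 \<le> 1" "NS > 0" "\<phi> > 0" "cTX > 0"
  shows "Cf \<alpha> th cTX \<phi> NS lam j q1 < Cf \<alpha> th cTX \<phi> NS lam j q2"
proof -
  define r where "r = sqrt (lam * th)"
  define v where "v = uu \<alpha> th lam j"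
  define w where "w = uu \<alpha> th lam (Suc j)"
  define A where "A = \<alpha>^j"
  have r0: "0 < r" using assms r_def by simp
  have r1: "r < 1" using r_lt1[of th lam] assms r_def by simp
  have vr: "r \<le> v" using uu_ge_r[of \<alpha> th lam j] assms r_def v_def by simp
  have wr: "r \<le> w" using uu_ge_r[of \<alpha> th lam "Suc j"] assms r_def w_def by simp
  have A: "0 < A" "A \<le> 1" using assms A_def by (auto simp: power_le_one)
  have wv: "w - v = A * (1 - \<alpha>) * (1 - r)" unfolding w_def v_def uu_def A_def r_def[symmetric]
    by (simp add: algebra_simps)
  have vr2: "v - r = (1 - A) * (1 - r)" unfolding v_def uu_def A_def r_def[symmetric]
    by (simp add: algebra_simps)
  have pi: "real j * A * (1 - \<alpha>) \<le> 1 - A" unfolding A_def using pow_ineq assms by simp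
  have jw: "real j * (w - v) \<le> v - r"
  proof -
    have "real j * (w - v) = (real j * A * (1 - \<alpha>)) * (1 - r)" using wv by simp
    also have "\<dots> \<le> (1 - A) * (1 - r)" using pi r1 by (intro mult_right_mono) auto
    finally show ?thesis using vr2 by simp
  qed
  have v0: "0 < v" using r0 vr by simp
  have w0: "0 < w" using r0 wr by simp
  have "real j * (1/v - 1/w) = real j * (w - v) / (v * w)" using v0 w0 by (simp add: field_simps)
  also have "\<dots> \<le> (v - r) / (v * w)" using jw v0 w0 by (simp add: divide_right_mono)
  also have "\<dots> \<le> (v - r) / (v * r)" using vr wr r0 v0 by (intro divide_left_mono mult_left_mono) auto
  also have "\<dots> = 1/r - 1/v" using r0 v0 by (simp add: field_simps)
  finally have key: "real j * (1/v - 1/w) \<le> 1/r - 1/v" .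
  define c1 where "c1 = cc cTX \<phi> NS th lam v"
  define c2 where "c2 = cc cTX \<phi> NS th lam w"
  have "real j * (c2 - c1) = \<phi> / real NS * (real j * (1/v - 1/w))"
    unfolding c1_def c2_def cc_def r_def[symmetric] by (simp add: algebra_simps)
  also have "\<dots> \<le> \<phi> / real NS * (1/r - 1/v)" using key assms by (intro mult_left_mono) auto
  also have "\<dots> < c1" unfolding c1_def cc_def r_def[symmetric] using assms by (simp add: algebra_simps)
  finally have cd: "real j * (c2 - c1) < c1" .
  define t1 where "t1 = 1 - q1"
  define t2 where "t2 = 1 - q2"
  have t: "t2 < t1" "0 \<le> t2" using assms t1_def t2_def by auto
  have d1: "real j + t1 > 0" "real j + t2 > 0" using t assms by auto
  have id: "(c1 + t2*(c2-c1)) * (real j + t1) - (c1 + t1*(c2-c1)) * (real j + t2) = (t1 - t2) * (c1 - real j * (c2 - c1))"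
    by (simp add: algebra_simps)
  have "0 < (t1 - t2) * (c1 - real j * (c2 - c1))" using t cd by simp
  then have "(c1 + t1*(c2-c1)) * (real j + t2) < (c1 + t2*(c2-c1)) * (real j + t1)" using id by linarith
  then have "(c1 + t1*(c2-c1)) / (real j + t1) < (c1 + t2*(c2-c1)) / (real j + t2)"
    using d1 by (simp add: divide_simps)
  have N: "q*c1 + (1-q)*c2 = c1 + (1-q)*(c2-c1)" for q by (simp add: algebra_simps)
  have Dq: "real j + 1 - q = real j + (1 - q)" for q by simp
  have E: "Cf \<alpha> th cTX \<phi> NS lam j q = (c1 + (1-q)*(c2-c1)) / (real j + (1 - q))" for q
    unfolding Cf_def v_def[symmetric] w_def[symmetric] c1_def[symmetric] c2_def[symmetric] N Dq ..
  show ?thesis unfolding E using \<open>(c1 + t1*(c2-c1)) / (real j + t1) < (c1 + t2*(c2-c1)) / (real j + t2)\<close>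
    unfolding t1_def t2_def .
qed



definition inblock :: "(nat \<Rightarrow> real) \<Rightarrow> nat \<Rightarrow> real \<times> real \<Rightarrow> bool" where
  "inblock ls j x \<longleftrightarrow> 1 \<le> j \<and> ((snd x = 1 \<and> ls (j - 1) < fst x \<and> fst x < ls j)
      \<or> (fst x = ls j \<and> 0 \<le> snd x \<and> snd x \<le> 1))"

lemma L_set_block: "x \<in> L_set \<alpha> th \<Longrightarrow> \<exists>j. inblock (lam_star \<alpha> th) j x"
  unfolding L_set_def inblock_def by auto

lemma mp_chain:
  fixes ls :: "nat \<Rightarrow> real" and P Q :: "nat \<Rightarrow> real \<Rightarrow> real" and F :: "real \<times> real \<Rightarrow> real"
  assumes ls: "\<And>j. ls j < ls (Suc j)" and ls0: "0 \<le> ls 0"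
    and Pm: "\<And>j a b. 1 \<le> j \<Longrightarrow> ls (j - 1) \<le> a \<Longrightarrow> 0 < a \<Longrightarrow> a < b \<Longrightarrow> b \<le> ls j \<Longrightarrow> P j a < P j b"
    and Qm: "\<And>j p p'. 1 \<le> j \<Longrightarrow> 0 \<le> p \<Longrightarrow> p < p' \<Longrightarrow> p' \<le> 1 \<Longrightarrow> Q j p' < Q j p"
    and Q1: "\<And>j. 1 \<le> j \<Longrightarrow> Q j 1 = P j (ls j)"
    and Q0: "\<And>j. 1 \<le> j \<Longrightarrow> Q j 0 = P (Suc j) (ls j)"
    and Fo: "\<And>j lam. 1 \<le> j \<Longrightarrow> ls (j - 1) < lam \<Longrightarrow> lam < ls j \<Longrightarrow> F (lam, 1) = P j lam"
    and Fp: "\<And>j p. 1 \<le> j \<Longrightarrow> 0 \<le> p \<Longrightarrow> p \<le> 1 \<Longrightarrow> F (ls j, p) = Q j p"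
    and x: "inblock ls jx x" and y: "inblock ls jy y" and succ: "mp_succ x y"
  shows "F y < F x"
proof -
  have lsm: "k < m \<Longrightarrow> ls k < ls m" for k m using ls by (rule lift_Suc_mono_less)
  have lsle: "k \<le> m \<Longrightarrow> ls k \<le> ls m" for k m using lsm by (cases "k = m") (auto intro: less_imp_le)
  have lspos: "1 \<le> k \<Longrightarrow> 0 < ls k" for k using lsm[of 0 k] ls0 by simp
  have Qr: "Q j 1 \<le> Q j p \<and> Q j p \<le> Q j 0" if "1 \<le> j" "0 \<le> p" "p \<le> 1" for j p
    using Qm[of j p 1] Qm[of j 0 p] that by (cases "p = 1"; cases "p = 0") auto
  define b where "b k = P (Suc k) (ls k)" for k
  have up: "F z \<le> b j" if "inblock ls j z" for j z
  proof -
    from that have j: "1 \<le> j" by (simp add: inblock_def)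
    from that consider "snd z = 1" "ls (j - 1) < fst z" "fst z < ls j" | "fst z = ls j" "0 \<le> snd z" "snd z \<le> 1"
      by (auto simp: inblock_def)
    then show ?thesis
    proof cases
      case 1
      have "fst z > 0" using 1 ls0 lsle[of 0 "j - 1"] by simp
      then have "P j (fst z) < P j (ls j)" using Pm[of j "fst z" "ls j"] 1 j by simp
      moreover have "F z = P j (fst z)" using Fo[of j "fst z"] 1 j by (metis prod.collapse)
      ultimately show ?thesis using Q1[OF j] Qr[OF j, of 0] Q0[OF j] by (simp add: b_def)
    next
      case 2
      have "F z = Q j (snd z)" using Fp[of j "snd z"] 2 j by (metis prod.collapse)
      then show ?thesis using Qr[OF j 2(2,3)] Q0[OF j] by (simp add: b_def)
    qed
  qed
  have low: "b (j - 1) < F z" if "inblock ls j z" "2 \<le> j" for j z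
  proof -
    from that have j: "1 \<le> j" by (simp add: inblock_def)
    have sj: "Suc (j - 1) = j" using j by simp
    have lp: "0 < ls (j - 1)" using lspos[of "j - 1"] that by simp
    have ll: "ls (j - 1) < ls j" using lsm[of "j - 1" j] j by simp
    from that consider "snd z = 1" "ls (j - 1) < fst z" "fst z < ls j" | "fst z = ls j" "0 \<le> snd z" "snd z \<le> 1"
      by (auto simp: inblock_def)
    then show ?thesis
    proof cases
      case 1
      have "P j (ls (j - 1)) < P j (fst z)" using Pm[of j "ls (j - 1)" "fst z"] 1 j lp by simp
      moreover have "F z = P j (fst z)" using Fo[of j "fst z"] 1 j by (metis prod.collapse)
      ultimately show ?thesis unfolding b_def sj by simp
    next
      case 2
      have "F z = Q j (snd z)" using Fp[of j "snd z"] 2 j by (metis prod.collapse)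
      moreover have "P j (ls (j - 1)) < P j (ls j)" using Pm[of j "ls (j - 1)" "ls j"] j lp ll by simp
      ultimately show ?thesis unfolding b_def sj using Qr[OF j 2(2,3)] Q1[OF j] by simp
    qed
  qed
  have bs: "b k < b (Suc k)" if "1 \<le> k" for k
  proof -
    have "inblock ls (Suc k) (ls (Suc k), 0)" by (simp add: inblock_def)
    from low[OF this] up[OF this] that show ?thesis by simp
  qed
  have bm: "b k \<le> b m" if "1 \<le> k" "k \<le> m" for k m
    using that(2,1)
  proof (induction m rule: dec_induct)
    case base then show ?case by simp
  next
    case (step m) then show ?case using bs[of m] by simp
  qed
  have jx: "1 \<le> jx" and jy: "1 \<le> jy" using x y by (auto simp: inblock_def)
  have fx: "fst x \<le> ls jx" using x by (auto simp: inblock_def)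
  have fy: "ls (jy - 1) < fst y" using y lsm[of "jy - 1" jy] by (auto simp: inblock_def)
  consider "jy < jx" | "jx < jy" | "jx = jy" by linarith
  then show ?thesis
  proof cases
    case 1
    have "F y \<le> b jy" by (rule up[OF y])
    also have "\<dots> \<le> b (jx - 1)" using bm[of jy "jx - 1"] 1 jy by simp
    also have "\<dots> < F x" using low[OF x] 1 jy by simp
    finally show ?thesis .
  next
    case 2
    have "jx \<le> jy - 1" using 2 by simp
    then have "ls jx \<le> ls (jy - 1)" by (rule lsle)
    then have "fst x < fst y" using fx fy by simp
    then show ?thesis using succ by (simp add: mp_succ_def)
  next
    case 3
    define j where "j = jx"
    have xb: "inblock ls j x" and yb: "inblock ls j y" using x y 3 j_def by auto
    have j: "1 \<le> j" using jx j_def by simp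
    from xb consider "snd x = 1" "ls (j - 1) < fst x" "fst x < ls j" | "fst x = ls j" "0 \<le> snd x" "snd x \<le> 1"
      by (auto simp: inblock_def)
    then show ?thesis
    proof cases
      case x1: 1
      from yb consider "snd y = 1" "ls (j - 1) < fst y" "fst y < ls j" | "fst y = ls j" "0 \<le> snd y" "snd y \<le> 1"
        by (auto simp: inblock_def)
      then show ?thesis
      proof cases
        case y1: 1
        have "fst y < fst x" using succ x1 y1 by (auto simp: mp_succ_def)
        moreover have "0 < fst y" using y1 ls0 lsle[of 0 "j - 1"] by simp
        ultimately have "P j (fst y) < P j (fst x)" using Pm[of j "fst y" "fst x"] x1 y1 j by simp
        moreover have "F x = P j (fst x)" using Fo[of j "fst x"] x1 j by (metis prod.collapse)
        moreover have "F y = P j (fst y)" using Fo[of j "fst y"] y1 j by (metis prod.collapse)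
        ultimately show ?thesis by simp
      next
        case y2: 2
        then show ?thesis using succ x1 by (auto simp: mp_succ_def)
      qed
    next
      case x2: 2
      have Fx: "F x = Q j (snd x)" using Fp[of j "snd x"] x2 j by (metis prod.collapse)
      from yb consider "snd y = 1" "ls (j - 1) < fst y" "fst y < ls j" | "fst y = ls j" "0 \<le> snd y" "snd y \<le> 1"
        by (auto simp: inblock_def)
      then show ?thesis
      proof cases
        case y1: 1
        have "0 < fst y" using y1 ls0 lsle[of 0 "j - 1"] by simp
        then have "P j (fst y) < P j (ls j)" using Pm[of j "fst y" "ls j"] y1 j by simp
        moreover have "F y = P j (fst y)" using Fo[of j "fst y"] y1 j by (metis prod.collapse)
        ultimately show ?thesis using Fx Qr[OF j x2(2,3)] Q1[OF j] by simp
      next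
        case y2: 2
        have "snd x < snd y" using succ x2 y2 by (auto simp: mp_succ_def)
        then have "Q j (snd y) < Q j (snd x)" using Qm[of j "snd x" "snd y"] x2 y2 j by simp
        moreover have "F y = Q j (snd y)" using Fp[of j "snd y"] y2 j by (metis prod.collapse)
        ultimately show ?thesis using Fx by simp
      qed
    qed
  qed
qed



lemma lim_within_cong:
  fixes f g :: "real \<Rightarrow> real \<times> real"
  assumes "isCont f a" "\<And>l. l \<in> S \<Longrightarrow> g l = f l" "f a = c"
  shows "(g \<longlongrightarrow> c) (at a within S)"
proof -
  have "(f \<longlongrightarrow> f a) (at a within S)"
    using continuous_at_imp_continuous_at_within[OF assms(1)] continuous_within by blast
  moreover have "eventually (\<lambda>l. f l = g l) (at a within S)"
    unfolding eventually_at_filter using assms(2) by (auto intro: always_eventually)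
  ultimately show ?thesis using assms(3) tendsto_cong by metis
qed

lemma cont_cong:
  fixes f g :: "real \<Rightarrow> real \<times> real"
  assumes "\<And>l. l \<in> S \<Longrightarrow> isCont f l" "\<And>l. l \<in> S \<Longrightarrow> g l = f l"
  shows "continuous_on S g"
  using continuous_at_imp_continuous_on[of S f] assms continuous_on_cong by metis

lemma vals_pos:
  assumes c: "cTX > 0" "\<phi> > 0" and th: "th = \<phi> / cTX" and al: "0 < \<alpha>" "\<alpha> < 1" and j: "1 \<le> j"
  shows "\<And>lam. lam_star \<alpha> th (j - 1) < lam \<Longrightarrow> lam < lam_star \<alpha> th j \<Longrightarrow>
            M_MP \<alpha> cTX \<phi> lam 1 = Mf \<alpha> th lam j 1 \<and> C_MP \<alpha> cTX \<phi> NS lam 1 = Cf \<alpha> th cTX \<phi> NS lam j 1"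
    and "\<And>p. 0 \<le> p \<Longrightarrow> p \<le> 1 \<Longrightarrow>
            M_MP \<alpha> cTX \<phi> (lam_star \<alpha> th j) p = Mf \<alpha> th (lam_star \<alpha> th j) j p
          \<and> C_MP \<alpha> cTX \<phi> NS (lam_star \<alpha> th j) p = Cf \<alpha> th cTX \<phi> NS (lam_star \<alpha> th j) j p"
proof -
  have th0: "th > 0" using c th by simp
  have a0: "0 \<le> \<alpha>" using al by simp
  note pj = lam_star_prop[OF th0 a0 al(2), of j] and pj1 = lam_star_prop[OF th0 a0 al(2), of "j - 1"]
  note posj = lam_star_pos[OF th0 al j]
  {
    fix lam assume l1: "lam_star \<alpha> th (j - 1) < lam" and l2: "lam < lam_star \<alpha> th j"
    have lam: "0 < lam" "lam < lam_th th" using l1 l2 pj1 posj by auto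
    have below: "uu \<alpha> th lam i < v_th th lam" if "1 \<le> i" "i < j" for i
    proof -
      have "eta \<alpha> th i lam \<le> eta \<alpha> th (j - 1) lam"
        using eta_idx[OF th0 a0 al(2), of lam i "j - 1"] that lam by simp
      also have "\<dots> < eta \<alpha> th (j - 1) (lam_star \<alpha> th (j - 1))"
        using eta_mono[OF th0 a0 al(2), of "lam_star \<alpha> th (j - 1)" lam "j - 1"] pj1 l1 by blast
      also have "\<dots> = 0" using pj1 by simp
      finally show ?thesis by (simp add: eta_uu)
    qed
    have ej: "0 < eta \<alpha> th j lam"
      using eta_mono[OF th0 a0 al(2), of lam "lam_star \<alpha> th j" j] pj l2 lam by simp
    have above: "v_th th lam < uu \<alpha> th lam (Suc j)"
      using eta_idx[OF th0 a0 al(2), of lam j "Suc j"] ej lam by (simp add: eta_uu)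
    have at: "(v_th th lam < uu \<alpha> th lam j \<and> (1::real) = 1) \<or> (uu \<alpha> th lam j = v_th th lam \<and> (1::real) = 1)"
      using ej by (simp add: eta_uu)
    note mb = M_block[OF c th al lam j zero_le_one order_refl below above at]
    have "M_MP \<alpha> cTX \<phi> lam 1 = Mf \<alpha> th lam j 1 \<and> C_MP \<alpha> cTX \<phi> NS lam 1 = Cf \<alpha> th cTX \<phi> NS lam j 1"
      using mb by simp
  }
  then show "\<And>lam. lam_star \<alpha> th (j - 1) < lam \<Longrightarrow> lam < lam_star \<alpha> th j \<Longrightarrow>
            M_MP \<alpha> cTX \<phi> lam 1 = Mf \<alpha> th lam j 1 \<and> C_MP \<alpha> cTX \<phi> NS lam 1 = Cf \<alpha> th cTX \<phi> NS lam j 1"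
    by blast
  {
    fix p :: real assume p: "0 \<le> p" "p \<le> 1"
    define lam where "lam = lam_star \<alpha> th j"
    have lam: "0 < lam" "lam < lam_th th" using posj lam_def by auto
    have e0: "eta \<alpha> th j lam = 0" using pj lam_def by simp
    have below: "uu \<alpha> th lam i < v_th th lam" if "1 \<le> i" "i < j" for i
      using eta_idx_strict[OF th0 al, of lam i j] that lam e0 by (simp add: eta_uu)
    have above: "v_th th lam < uu \<alpha> th lam (Suc j)"
      using eta_idx_strict[OF th0 al, of lam j "Suc j"] e0 lam by (simp add: eta_uu)
    have at: "(v_th th lam < uu \<alpha> th lam j \<and> p = 1) \<or> (uu \<alpha> th lam j = v_th th lam \<and> p = p)"
      using e0 by (simp add: eta_uu)
    note mb = M_block[OF c th al lam j p below above at]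
    have "M_MP \<alpha> cTX \<phi> (lam_star \<alpha> th j) p = Mf \<alpha> th (lam_star \<alpha> th j) j p
          \<and> C_MP \<alpha> cTX \<phi> NS (lam_star \<alpha> th j) p = Cf \<alpha> th cTX \<phi> NS (lam_star \<alpha> th j) j p"
      using mb lam_def by simp
  }
  then show "\<And>p. 0 \<le> p \<Longrightarrow> p \<le> 1 \<Longrightarrow>
            M_MP \<alpha> cTX \<phi> (lam_star \<alpha> th j) p = Mf \<alpha> th (lam_star \<alpha> th j) j p
          \<and> C_MP \<alpha> cTX \<phi> NS (lam_star \<alpha> th j) p = Cf \<alpha> th cTX \<phi> NS (lam_star \<alpha> th j) j p"
    by blast
qed



lemma part_pos:
  fixes \<alpha> cTX \<phi> :: real and NS :: nat
  assumes al: "0 < \<alpha>" "\<alpha> < 1" and c: "cTX > 0" "\<phi> > 0" and NS: "1 \<le> NS"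
  shows
   "(\<forall>j\<ge>1.
       continuous_on {lam_star \<alpha> (\<phi>/cTX) (j - 1) <..< lam_star \<alpha> (\<phi>/cTX) j}
         (\<lambda>lam. (C_MP \<alpha> cTX \<phi> NS lam 1, M_MP \<alpha> cTX \<phi> lam 1))
     \<and> continuous_on {0..1}
         (\<lambda>p0. (C_MP \<alpha> cTX \<phi> NS (lam_star \<alpha> (\<phi>/cTX) j) p0,
                M_MP \<alpha> cTX \<phi> (lam_star \<alpha> (\<phi>/cTX) j) p0))
     \<and> ((\<lambda>lam. (C_MP \<alpha> cTX \<phi> NS lam 1, M_MP \<alpha> cTX \<phi> lam 1))
          \<longlongrightarrow> (C_MP \<alpha> cTX \<phi> NS (lam_star \<alpha> (\<phi>/cTX) j) 1,
               M_MP \<alpha> cTX \<phi> (lam_star \<alpha> (\<phi>/cTX) j) 1))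
         (at (lam_star \<alpha> (\<phi>/cTX) j)
            within {lam_star \<alpha> (\<phi>/cTX) (j - 1) <..< lam_star \<alpha> (\<phi>/cTX) j})
     \<and> ((\<lambda>lam. (C_MP \<alpha> cTX \<phi> NS lam 1, M_MP \<alpha> cTX \<phi> lam 1))
          \<longlongrightarrow> (C_MP \<alpha> cTX \<phi> NS (lam_star \<alpha> (\<phi>/cTX) j) 0,
               M_MP \<alpha> cTX \<phi> (lam_star \<alpha> (\<phi>/cTX) j) 0))
         (at (lam_star \<alpha> (\<phi>/cTX) j)
            within {lam_star \<alpha> (\<phi>/cTX) j <..< lam_star \<alpha> (\<phi>/cTX) (Suc j)}))
    \<and> (\<forall>x\<in>L_set \<alpha> (\<phi>/cTX). \<forall>y\<in>L_set \<alpha> (\<phi>/cTX). mp_succ x y \<longrightarrow>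
         C_MP \<alpha> cTX \<phi> NS (fst x) (snd x) < C_MP \<alpha> cTX \<phi> NS (fst y) (snd y)
       \<and> M_MP \<alpha> cTX \<phi> (fst x) (snd x) > M_MP \<alpha> cTX \<phi> (fst y) (snd y))"
proof -
  define th where "th = \<phi> / cTX"
  have th0: "th > 0" using c th_def by simp
  have a0: "0 \<le> \<alpha>" using al by simp
  define ls where "ls = lam_star \<alpha> th"
  have NS0: "real NS > 0" using NS by simp
  have NSn: "NS > 0" using NS by simp
  have ls0: "ls 0 = 0" using lam_star_0[OF th0 a0 al(2)] ls_def by simp
  have lsp: "0 < ls j \<and> ls j < lam_th th" if "1 \<le> j" for j
    using lam_star_pos[OF th0 al that] ls_def by simp
  have lss: "ls j < ls (Suc j)" for j using lam_star_strict[OF th0 al] ls_def by simp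
  have lsge: "0 \<le> ls j" for j using lam_star_prop[OF th0 a0 al(2)] ls_def by simp
  note VO = vals_pos(1)[OF c th_def al, folded ls_def]
  note VP = vals_pos(2)[OF c th_def al, folded ls_def]
  have part1: "continuous_on {ls (j - 1) <..< ls j} (\<lambda>lam. (C_MP \<alpha> cTX \<phi> NS lam 1, M_MP \<alpha> cTX \<phi> lam 1))
     \<and> continuous_on {0..1} (\<lambda>p0. (C_MP \<alpha> cTX \<phi> NS (ls j) p0, M_MP \<alpha> cTX \<phi> (ls j) p0))
     \<and> ((\<lambda>lam. (C_MP \<alpha> cTX \<phi> NS lam 1, M_MP \<alpha> cTX \<phi> lam 1))
          \<longlongrightarrow> (C_MP \<alpha> cTX \<phi> NS (ls j) 1, M_MP \<alpha> cTX \<phi> (ls j) 1)) (at (ls j) within {ls (j - 1) <..< ls j})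
     \<and> ((\<lambda>lam. (C_MP \<alpha> cTX \<phi> NS lam 1, M_MP \<alpha> cTX \<phi> lam 1))
          \<longlongrightarrow> (C_MP \<alpha> cTX \<phi> NS (ls j) 0, M_MP \<alpha> cTX \<phi> (ls j) 0)) (at (ls j) within {ls j <..< ls (Suc j)})"
    if j: "1 \<le> j" for j
  proof (intro conjI)
    have ic: "isCont (\<lambda>l. (Cf \<alpha> th cTX \<phi> NS l k 1, Mf \<alpha> th l k 1)) l" if "0 < l" "l \<le> lam_th th" "1 \<le> k" for l k
      using that Cf_cont[OF a0 al(2) th0 that(1,2), of k 1] Mf_cont[of k 1] by (intro continuous_intros) auto
    show "continuous_on {ls (j - 1) <..< ls j} (\<lambda>lam. (C_MP \<alpha> cTX \<phi> NS lam 1, M_MP \<alpha> cTX \<phi> lam 1))"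
    proof (rule cont_cong[where f="\<lambda>l. (Cf \<alpha> th cTX \<phi> NS l j 1, Mf \<alpha> th l j 1)"])
      fix l assume l: "l \<in> {ls (j - 1) <..< ls j}"
      have "0 < l" "l \<le> lam_th th" using l lsge[of "j - 1"] lsp[OF j] by auto
      then show "isCont (\<lambda>l. (Cf \<alpha> th cTX \<phi> NS l j 1, Mf \<alpha> th l j 1)) l" using ic j by blast
      show "(C_MP \<alpha> cTX \<phi> NS l 1, M_MP \<alpha> cTX \<phi> l 1) = (Cf \<alpha> th cTX \<phi> NS l j 1, Mf \<alpha> th l j 1)"
        using VO[OF j, of l NS] l by simp
    qed
    show "continuous_on {0..1} (\<lambda>p0. (C_MP \<alpha> cTX \<phi> NS (ls j) p0, M_MP \<alpha> cTX \<phi> (ls j) p0))"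
    proof -
      have "continuous_on {0..1} (\<lambda>p0. (Cf \<alpha> th cTX \<phi> NS (ls j) j p0, Mf \<alpha> th (ls j) j p0))"
        using Cf_cont_q[OF j] Mf_cont_q[OF j] by (intro continuous_on_Pair)
      moreover have "\<forall>p\<in>{0..1}. (C_MP \<alpha> cTX \<phi> NS (ls j) p, M_MP \<alpha> cTX \<phi> (ls j) p)
                       = (Cf \<alpha> th cTX \<phi> NS (ls j) j p, Mf \<alpha> th (ls j) j p)"
        using VP[OF j] by auto
      ultimately show ?thesis using continuous_on_cong by (metis (no_types, lifting))
    qed
    show "((\<lambda>lam. (C_MP \<alpha> cTX \<phi> NS lam 1, M_MP \<alpha> cTX \<phi> lam 1))
          \<longlongrightarrow> (C_MP \<alpha> cTX \<phi> NS (ls j) 1, M_MP \<alpha> cTX \<phi> (ls j) 1)) (at (ls j) within {ls (j - 1) <..< ls j})"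
    proof (rule lim_within_cong[where f="\<lambda>l. (Cf \<alpha> th cTX \<phi> NS l j 1, Mf \<alpha> th l j 1)"])
      show "isCont (\<lambda>l. (Cf \<alpha> th cTX \<phi> NS l j 1, Mf \<alpha> th l j 1)) (ls j)" using ic lsp[OF j] j by auto
      fix l assume "l \<in> {ls (j - 1) <..< ls j}"
      then show "(C_MP \<alpha> cTX \<phi> NS l 1, M_MP \<alpha> cTX \<phi> l 1) = (Cf \<alpha> th cTX \<phi> NS l j 1, Mf \<alpha> th l j 1)"
        using VO[OF j, of l NS] by simp
    next
      show "(Cf \<alpha> th cTX \<phi> NS (ls j) j 1, Mf \<alpha> th (ls j) j 1) = (C_MP \<alpha> cTX \<phi> NS (ls j) 1, M_MP \<alpha> cTX \<phi> (ls j) 1)"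
        using VP[OF j, of 1 NS] by simp
    qed
    show "((\<lambda>lam. (C_MP \<alpha> cTX \<phi> NS lam 1, M_MP \<alpha> cTX \<phi> lam 1))
          \<longlongrightarrow> (C_MP \<alpha> cTX \<phi> NS (ls j) 0, M_MP \<alpha> cTX \<phi> (ls j) 0)) (at (ls j) within {ls j <..< ls (Suc j)})"
    proof (rule lim_within_cong[where f="\<lambda>l. (Cf \<alpha> th cTX \<phi> NS l (Suc j) 1, Mf \<alpha> th l (Suc j) 1)"])
      show "isCont (\<lambda>l. (Cf \<alpha> th cTX \<phi> NS l (Suc j) 1, Mf \<alpha> th l (Suc j) 1)) (ls j)" using ic lsp[OF j] j by auto
      fix l assume "l \<in> {ls j <..< ls (Suc j)}"
      then show "(C_MP \<alpha> cTX \<phi> NS l 1, M_MP \<alpha> cTX \<phi> l 1) = (Cf \<alpha> th cTX \<phi> NS l (Suc j) 1, Mf \<alpha> th l (Suc j) 1)"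
        using VO[of "Suc j" l NS] by simp
    next
      show "(Cf \<alpha> th cTX \<phi> NS (ls j) (Suc j) 1, Mf \<alpha> th (ls j) (Suc j) 1) = (C_MP \<alpha> cTX \<phi> NS (ls j) 0, M_MP \<alpha> cTX \<phi> (ls j) 0)"
        using VP[OF j, of 0 NS] Cf_shift Mf_shift[OF j] by simp
    qed
  qed
  have part2: "C_MP \<alpha> cTX \<phi> NS (fst x) (snd x) < C_MP \<alpha> cTX \<phi> NS (fst y) (snd y)
       \<and> M_MP \<alpha> cTX \<phi> (fst x) (snd x) > M_MP \<alpha> cTX \<phi> (fst y) (snd y)"
    if x: "x \<in> L_set \<alpha> th" and y: "y \<in> L_set \<alpha> th" and s: "mp_succ x y" for x y
  proof -
    obtain jx jy where bx: "inblock ls jx x" and "inblock ls jy y"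
      using L_set_block[OF x] L_set_block[OF y] ls_def by blast
    note byy = this(2)
    have "M_MP \<alpha> cTX \<phi> (fst y) (snd y) < M_MP \<alpha> cTX \<phi> (fst x) (snd x)"
    proof (rule mp_chain[of ls "\<lambda>j l. Mf \<alpha> th l j 1" "\<lambda>j p. Mf \<alpha> th (ls j) j p" "\<lambda>z. M_MP \<alpha> cTX \<phi> (fst z) (snd z)",
          OF lss _ _ _ _ _ _ _ bx byy s])
      show "0 \<le> ls 0" using ls0 by simp
      fix j :: nat and a b :: real assume "1 \<le> j" "ls (j - 1) \<le> a" "0 < a" "a < b" "b \<le> ls j"
      then show "Mf \<alpha> th a j 1 < Mf \<alpha> th b j 1" using Mf_mono_lam[OF a0 th0] by simp
    next
      fix j :: nat and p p' :: real assume j: "1 \<le> j" "0 \<le> p" "p < p'" "p' \<le> 1"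
      have l: "0 < ls j" "ls j \<le> lam_th th" using lsp[OF j(1)] by auto
      show "Mf \<alpha> th (ls j) j p' < Mf \<alpha> th (ls j) j p" by (rule Mf_mono_q[OF al th0 l j])
    next
      fix j :: nat assume "1 \<le> j"
      then show "Mf \<alpha> th (ls j) j 0 = Mf \<alpha> th (ls j) (Suc j) 1" by (rule Mf_shift)
    next
      fix j :: nat and lam :: real assume "1 \<le> j" "ls (j - 1) < lam" "lam < ls j"
      then show "M_MP \<alpha> cTX \<phi> (fst (lam, 1::real)) (snd (lam, 1::real)) = Mf \<alpha> th lam j 1" using VO by simp
    next
      fix j :: nat and p :: real assume "1 \<le> j" "0 \<le> p" "p \<le> 1"
      then show "M_MP \<alpha> cTX \<phi> (fst (ls j, p)) (snd (ls j, p)) = Mf \<alpha> th (ls j) j p" using VP by simp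
    next
      fix j :: nat
      show "Mf \<alpha> th (ls j) j 1 = Mf \<alpha> th (ls j) j 1" by simp
    qed
    moreover have "- C_MP \<alpha> cTX \<phi> NS (fst y) (snd y) < - C_MP \<alpha> cTX \<phi> NS (fst x) (snd x)"
    proof (rule mp_chain[of ls "\<lambda>j l. - Cf \<alpha> th cTX \<phi> NS l j 1" "\<lambda>j p. - Cf \<alpha> th cTX \<phi> NS (ls j) j p"
          "\<lambda>z. - C_MP \<alpha> cTX \<phi> NS (fst z) (snd z)", OF lss _ _ _ _ _ _ _ bx byy s])
      show "0 \<le> ls 0" using ls0 by simp
      fix j :: nat and a b :: real assume j: "1 \<le> j" "ls (j - 1) \<le> a" "0 < a" "a < b" "b \<le> ls j"
      then have "b \<le> lam_th th" using lsp[of j] by simp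
      then show "- Cf \<alpha> th cTX \<phi> NS a j 1 < - Cf \<alpha> th cTX \<phi> NS b j 1"
        using Cf_mono_lam[OF a0 al(2) th0] j NSn c by simp
    next
      fix j :: nat and p p' :: real assume j: "1 \<le> j" "0 \<le> p" "p < p'" "p' \<le> 1"
      have l: "0 < ls j" "ls j \<le> lam_th th" using lsp[OF j(1)] by auto
      show "- Cf \<alpha> th cTX \<phi> NS (ls j) j p' < - Cf \<alpha> th cTX \<phi> NS (ls j) j p"
        using Cf_mono_q[OF al th0 l j NSn c(2) c(1)] by simp
    next
      fix j :: nat
      show "- Cf \<alpha> th cTX \<phi> NS (ls j) j 0 = - Cf \<alpha> th cTX \<phi> NS (ls j) (Suc j) 1" using Cf_shift by simp
    next
      fix j :: nat and lam :: real assume "1 \<le> j" "ls (j - 1) < lam" "lam < ls j"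
      then show "- C_MP \<alpha> cTX \<phi> NS (fst (lam, 1::real)) (snd (lam, 1::real)) = - Cf \<alpha> th cTX \<phi> NS lam j 1" using VO by simp
    next
      fix j :: nat and p :: real assume "1 \<le> j" "0 \<le> p" "p \<le> 1"
      then show "- C_MP \<alpha> cTX \<phi> NS (fst (ls j, p)) (snd (ls j, p)) = - Cf \<alpha> th cTX \<phi> NS (ls j) j p" using VP by simp
    next
      fix j :: nat
      show "- Cf \<alpha> th cTX \<phi> NS (ls j) j 1 = - Cf \<alpha> th cTX \<phi> NS (ls j) j 1" by simp
    qed
    ultimately show ?thesis by simp
  qed
  show ?thesis using part1 part2 unfolding th_def[symmetric] ls_def by blast
qed



lemma part_zero:
  fixes cTX \<phi> :: real and NS :: nat
  assumes c: "cTX > 0" "\<phi> > 0" and NS: "1 \<le> NS"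
  shows
   "(\<forall>j\<ge>1.
       continuous_on {lam_star 0 (\<phi>/cTX) (j - 1) <..< lam_star 0 (\<phi>/cTX) j}
         (\<lambda>lam. (C_MP 0 cTX \<phi> NS lam 1, M_MP 0 cTX \<phi> lam 1))
     \<and> continuous_on {0..1}
         (\<lambda>p0. (C_MP 0 cTX \<phi> NS (lam_star 0 (\<phi>/cTX) j) p0,
                M_MP 0 cTX \<phi> (lam_star 0 (\<phi>/cTX) j) p0))
     \<and> ((\<lambda>lam. (C_MP 0 cTX \<phi> NS lam 1, M_MP 0 cTX \<phi> lam 1))
          \<longlongrightarrow> (C_MP 0 cTX \<phi> NS (lam_star 0 (\<phi>/cTX) j) 1,
               M_MP 0 cTX \<phi> (lam_star 0 (\<phi>/cTX) j) 1))
         (at (lam_star 0 (\<phi>/cTX) j)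
            within {lam_star 0 (\<phi>/cTX) (j - 1) <..< lam_star 0 (\<phi>/cTX) j})
     \<and> ((\<lambda>lam. (C_MP 0 cTX \<phi> NS lam 1, M_MP 0 cTX \<phi> lam 1))
          \<longlongrightarrow> (C_MP 0 cTX \<phi> NS (lam_star 0 (\<phi>/cTX) j) 0,
               M_MP 0 cTX \<phi> (lam_star 0 (\<phi>/cTX) j) 0))
         (at (lam_star 0 (\<phi>/cTX) j)
            within {lam_star 0 (\<phi>/cTX) j <..< lam_star 0 (\<phi>/cTX) (Suc j)}))
    \<and> (\<forall>x\<in>L_set 0 (\<phi>/cTX). \<forall>y\<in>L_set 0 (\<phi>/cTX). mp_succ x y \<longrightarrow>
         C_MP 0 cTX \<phi> NS (fst x) (snd x) < C_MP 0 cTX \<phi> NS (fst y) (snd y)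
       \<and> M_MP 0 cTX \<phi> (fst x) (snd x) > M_MP 0 cTX \<phi> (fst y) (snd y))"
proof -
  define th where "th = \<phi> / cTX"
  have th0: "th > 0" using c th_def by simp
  define ls where "ls = lam_star 0 th"
  define LT where "LT = lam_th th"
  have LT0: "LT > 0" using lam_th_pos[OF th0] LT_def by simp
  have NS0: "real NS > 0" using NS by simp
  have ls0: "ls 0 = 0" using lam_star_0[OF th0] ls_def by simp
  have lsj: "ls j = LT" if "1 \<le> j" for j using lam_star_alpha0[OF th0 that] ls_def LT_def by simp
  define rT where "rT = sqrt (LT * th)"
  have rT: "0 < rT" "rT < 1" using r_lt1[OF th0, of LT] LT0 th0 rT_def LT_def by auto
  define ccT where "ccT = cc cTX \<phi> NS th LT 1"
  have ccT: "0 < ccT"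
  proof -
    have "1 < 1 / rT" using rT by simp
    then have "0 < cTX + \<phi> * (1 / rT - 1)" using c by (simp add: add_pos_pos)
    then show ?thesis unfolding ccT_def cc_def rT_def[symmetric] using NS0 by simp
  qed
  have VO: "M_MP 0 cTX \<phi> l 1 = sqrt (l * th) \<and> C_MP 0 cTX \<phi> NS l 1 = cc cTX \<phi> NS th l 1"
    if "0 < l" "l < LT" for l
    using M_zero_open(1)[OF c th_def that[unfolded LT_def], of 1] M_zero_open(2)[OF c th_def that[unfolded LT_def], of NS 1]
    by (simp add: Mf_def Cf_def uu_def)
  have VP: "M_MP 0 cTX \<phi> LT p = p * rT + (1 - p) \<and> C_MP 0 cTX \<phi> NS LT p = p * ccT"
    if "0 \<le> p" "p \<le> 1" for p
    using M_zero_th(1)[OF c th_def that] M_zero_th(2)[OF c th_def that, of NS] by (simp add: LT_def rT_def ccT_def)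
  have fcont: "isCont (\<lambda>l. (cc cTX \<phi> NS th l 1, sqrt (l * th))) l" if "0 < l" for l
    using that th0 unfolding cc_def by (intro continuous_intros) auto
  have emp: "{ls j <..< ls (Suc j)} = {}" if "1 \<le> j" for j using lsj[OF that] lsj[of "Suc j"] that by simp
  have part1: "continuous_on {ls (j - 1) <..< ls j} (\<lambda>lam. (C_MP 0 cTX \<phi> NS lam 1, M_MP 0 cTX \<phi> lam 1))
     \<and> continuous_on {0..1} (\<lambda>p0. (C_MP 0 cTX \<phi> NS (ls j) p0, M_MP 0 cTX \<phi> (ls j) p0))
     \<and> ((\<lambda>lam. (C_MP 0 cTX \<phi> NS lam 1, M_MP 0 cTX \<phi> lam 1))
          \<longlongrightarrow> (C_MP 0 cTX \<phi> NS (ls j) 1, M_MP 0 cTX \<phi> (ls j) 1)) (at (ls j) within {ls (j - 1) <..< ls j})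
     \<and> ((\<lambda>lam. (C_MP 0 cTX \<phi> NS lam 1, M_MP 0 cTX \<phi> lam 1))
          \<longlongrightarrow> (C_MP 0 cTX \<phi> NS (ls j) 0, M_MP 0 cTX \<phi> (ls j) 0)) (at (ls j) within {ls j <..< ls (Suc j)})"
    if j: "1 \<le> j" for j
  proof (intro conjI)
    show "((\<lambda>lam. (C_MP 0 cTX \<phi> NS lam 1, M_MP 0 cTX \<phi> lam 1))
          \<longlongrightarrow> (C_MP 0 cTX \<phi> NS (ls j) 0, M_MP 0 cTX \<phi> (ls j) 0)) (at (ls j) within {ls j <..< ls (Suc j)})"
      unfolding emp[OF j] by simp
    show "continuous_on {0..1} (\<lambda>p0. (C_MP 0 cTX \<phi> NS (ls j) p0, M_MP 0 cTX \<phi> (ls j) p0))"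
    proof -
      have "continuous_on {0..1} (\<lambda>p. (p * ccT, p * rT + (1 - p)))" by (intro continuous_intros)
      moreover have "\<forall>p\<in>{0..1}. (C_MP 0 cTX \<phi> NS (ls j) p, M_MP 0 cTX \<phi> (ls j) p) = (p * ccT, p * rT + (1 - p))"
        using VP lsj[OF j] by auto
      ultimately show ?thesis using continuous_on_cong by (metis (no_types, lifting))
    qed
    show "continuous_on {ls (j - 1) <..< ls j} (\<lambda>lam. (C_MP 0 cTX \<phi> NS lam 1, M_MP 0 cTX \<phi> lam 1))"
    proof (cases "j = 1")
      case True
      show ?thesis
      proof (rule cont_cong[where f="\<lambda>l. (cc cTX \<phi> NS th l 1, sqrt (l * th))"])
        fix l assume "l \<in> {ls (j - 1) <..< ls j}"
        then have l: "0 < l" "l < LT" using True ls0 lsj[OF j] by auto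
        then show "isCont (\<lambda>l. (cc cTX \<phi> NS th l 1, sqrt (l * th))) l" using fcont by blast
        show "(C_MP 0 cTX \<phi> NS l 1, M_MP 0 cTX \<phi> l 1) = (cc cTX \<phi> NS th l 1, sqrt (l * th))"
          using VO[OF l] by simp
      qed
    next
      case False
      then have "{ls (j - 1) <..< ls j} = {}" using j lsj[of "j - 1"] lsj[OF j] by simp
      then show ?thesis by simp
    qed
    show "((\<lambda>lam. (C_MP 0 cTX \<phi> NS lam 1, M_MP 0 cTX \<phi> lam 1))
          \<longlongrightarrow> (C_MP 0 cTX \<phi> NS (ls j) 1, M_MP 0 cTX \<phi> (ls j) 1)) (at (ls j) within {ls (j - 1) <..< ls j})"
    proof (cases "j = 1")
      case True
      show ?thesis
      proof (rule lim_within_cong[where f="\<lambda>l. (cc cTX \<phi> NS th l 1, sqrt (l * th))"])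
        show "isCont (\<lambda>l. (cc cTX \<phi> NS th l 1, sqrt (l * th))) (ls j)" using fcont lsj[OF j] LT0 by simp
        fix l assume "l \<in> {ls (j - 1) <..< ls j}"
        then have l: "0 < l" "l < LT" using True ls0 lsj[OF j] by auto
        then show "(C_MP 0 cTX \<phi> NS l 1, M_MP 0 cTX \<phi> l 1) = (cc cTX \<phi> NS th l 1, sqrt (l * th))"
          using VO[OF l] by simp
      next
        show "(cc cTX \<phi> NS th (ls j) 1, sqrt (ls j * th)) = (C_MP 0 cTX \<phi> NS (ls j) 1, M_MP 0 cTX \<phi> (ls j) 1)"
          using VP[of 1] lsj[OF j] by (simp add: ccT_def rT_def)
      qed
    next
      case False
      then have "{ls (j - 1) <..< ls j} = {}" using j lsj[of "j - 1"] lsj[OF j] by simp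
      then show ?thesis by simp
    qed
  qed
  have mem: "(snd x = 1 \<and> 0 < fst x \<and> fst x < LT) \<or> (fst x = LT \<and> 0 \<le> snd x \<and> snd x \<le> 1)"
    if xL: "x \<in> L_set 0 th" for x
  proof -
    obtain j where b: "inblock ls j x" using L_set_block[OF xL] ls_def by blast
    then have j: "1 \<le> j" by (simp add: inblock_def)
    show ?thesis
    proof (cases "j = 1")
      case True then show ?thesis using b ls0 lsj[OF j] by (auto simp: inblock_def)
    next
      case False then show ?thesis using b lsj[of "j - 1"] lsj[OF j] j by (auto simp: inblock_def)
    qed
  qed
  have rmono: "sqrt (a * th) < sqrt (b * th)" if "0 \<le> a" "a < b" for a b using that th0 by simp
  have ccmono: "cc cTX \<phi> NS th b 1 < cc cTX \<phi> NS th a 1" if "0 < a" "a < b" for a b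
  proof -
    have "1 / sqrt (b * th) < 1 / sqrt (a * th)" using rmono[of a b] that th0
      by (intro divide_strict_left_mono) auto
    then have "\<phi> * (1 / sqrt (b * th) - 1) < \<phi> * (1 / sqrt (a * th) - 1)" using c by simp
    then show ?thesis unfolding cc_def using NS0 by (simp add: divide_strict_right_mono)
  qed
  have part2: "C_MP 0 cTX \<phi> NS (fst x) (snd x) < C_MP 0 cTX \<phi> NS (fst y) (snd y)
       \<and> M_MP 0 cTX \<phi> (fst x) (snd x) > M_MP 0 cTX \<phi> (fst y) (snd y)"
    if x: "x \<in> L_set 0 th" and y: "y \<in> L_set 0 th" and s: "mp_succ x y" for x y
  proof -
    obtain a p where xe: "x = (a, p)" by (cases x)
    obtain b q where ye: "y = (b, q)" by (cases y)
    note mx = mem[OF x, unfolded xe, simplified] and my = mem[OF y, unfolded ye, simplified]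
    have s': "b < a \<or> (a = b \<and> p < q)" using s unfolding xe ye mp_succ_def by simp
    from mx show ?thesis unfolding xe ye fst_conv snd_conv
    proof
      assume xo: "p = 1 \<and> 0 < a \<and> a < LT"
      from my show "C_MP 0 cTX \<phi> NS a p < C_MP 0 cTX \<phi> NS b q \<and> M_MP 0 cTX \<phi> b q < M_MP 0 cTX \<phi> a p"
      proof
        assume yo: "q = 1 \<and> 0 < b \<and> b < LT"
        then have "b < a" using s' xo by auto
        then show ?thesis using VO xo yo ccmono rmono by auto
      next
        assume yp: "b = LT \<and> 0 \<le> q \<and> q \<le> 1"
        then show ?thesis using s' xo by auto
      qed
    next
      assume xp: "a = LT \<and> 0 \<le> p \<and> p \<le> 1"
      from my show "C_MP 0 cTX \<phi> NS a p < C_MP 0 cTX \<phi> NS b q \<and> M_MP 0 cTX \<phi> b q < M_MP 0 cTX \<phi> a p"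
      proof
        assume yo: "q = 1 \<and> 0 < b \<and> b < LT"
        have C1: "p * ccT \<le> ccT" using xp ccT by (simp add: mult_left_le_one_le)
        have C2: "ccT < cc cTX \<phi> NS th b 1" using ccmono[of b LT] yo unfolding ccT_def by simp
        have M1: "rT \<le> p * rT + (1 - p)"
        proof -
          have "(1 - p) * rT \<le> (1 - p) * 1" using xp rT by (intro mult_left_mono) auto
          then show ?thesis by (simp add: algebra_simps)
        qed
        have M2: "sqrt (b * th) < rT" using rmono[of b LT] yo unfolding rT_def by simp
        show ?thesis using VO[of b] VP[of p] yo xp C1 C2 M1 M2 by auto
      next
        assume yp: "b = LT \<and> 0 \<le> q \<and> q \<le> 1"
        then have pq: "p < q" using s' xp by auto
        have C: "p * ccT < q * ccT" using pq ccT by simp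
        have "(q - p) * (1 - rT) > 0" using pq rT by simp
        then have M: "q * rT + (1 - q) < p * rT + (1 - p)" by (simp add: algebra_simps)
        show ?thesis using VP[of p] VP[of q] yp xp C M by auto
      qed
    qed
  qed
  show ?thesis using part1 part2 unfolding th_def[symmetric] ls_def by blast
qed


theorem proposition2:
  fixes \<alpha> cTX \<phi> :: real and NS B :: nat
  assumes "0 \<le> \<alpha>" "\<alpha> < 1" "cTX > 0" "\<phi> > 0" "1 \<le> B" "B \<le> NS"
  shows
   "(\<forall>j\<ge>1.
       continuous_on {lam_star \<alpha> (\<phi>/cTX) (j - 1) <..< lam_star \<alpha> (\<phi>/cTX) j}
         (\<lambda>lam. (C_MP \<alpha> cTX \<phi> NS lam 1, M_MP \<alpha> cTX \<phi> lam 1))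
     \<and> continuous_on {0..1}
         (\<lambda>p0. (C_MP \<alpha> cTX \<phi> NS (lam_star \<alpha> (\<phi>/cTX) j) p0,
                M_MP \<alpha> cTX \<phi> (lam_star \<alpha> (\<phi>/cTX) j) p0))
     \<and> ((\<lambda>lam. (C_MP \<alpha> cTX \<phi> NS lam 1, M_MP \<alpha> cTX \<phi> lam 1))
          \<longlongrightarrow> (C_MP \<alpha> cTX \<phi> NS (lam_star \<alpha> (\<phi>/cTX) j) 1,
               M_MP \<alpha> cTX \<phi> (lam_star \<alpha> (\<phi>/cTX) j) 1))
         (at (lam_star \<alpha> (\<phi>/cTX) j)
            within {lam_star \<alpha> (\<phi>/cTX) (j - 1) <..< lam_star \<alpha> (\<phi>/cTX) j})
     \<and> ((\<lambda>lam. (C_MP \<alpha> cTX \<phi> NS lam 1, M_MP \<alpha> cTX \<phi> lam 1))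
          \<longlongrightarrow> (C_MP \<alpha> cTX \<phi> NS (lam_star \<alpha> (\<phi>/cTX) j) 0,
               M_MP \<alpha> cTX \<phi> (lam_star \<alpha> (\<phi>/cTX) j) 0))
         (at (lam_star \<alpha> (\<phi>/cTX) j)
            within {lam_star \<alpha> (\<phi>/cTX) j <..< lam_star \<alpha> (\<phi>/cTX) (Suc j)}))
    \<and> (\<forall>x\<in>L_set \<alpha> (\<phi>/cTX). \<forall>y\<in>L_set \<alpha> (\<phi>/cTX). mp_succ x y \<longrightarrow>
         C_MP \<alpha> cTX \<phi> NS (fst x) (snd x) < C_MP \<alpha> cTX \<phi> NS (fst y) (snd y)
       \<and> M_MP \<alpha> cTX \<phi> (fst x) (snd x) > M_MP \<alpha> cTX \<phi> (fst y) (snd y))"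
  proof -
  have NS: "1 \<le> NS" using assms by simp
  show ?thesis
  proof (cases "\<alpha> = 0")
    case True
    show ?thesis unfolding True by (rule part_zero[OF assms(3,4) NS])
  next
    case False
    then have "0 < \<alpha>" using assms by simp
    then show ?thesis by (rule part_pos[OF _ assms(2,3,4) NS])
  qed
qed

end
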